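(* Let $A$ be a bounded normal operator on a Hilbert space and $z_0$ a simple eigenvalue of $A$ (one-dimensional eigenspace) such that $z_0\notin C:=\mathrm{cvh}(\mathrm{spec}(A)\setminus\{z_0\})$. Let $z_1\in C$ satisfy $|z_0-z_1|=\min\{|w-z_0|:w\in C\}$. Let $P$ be an orthogonal projection and $w_1\neq w_2$ two distinct eigenvalues of $PAP\restriction\mathrm{ran}\,P$. Then \[ \frac{(w_1-z_1)\cdot(z_0-z_1)}{|z_1-z_0|^2}+\frac{(w_2-z_1)\cdot(z_0-z_1)}{|z_1-z_0|^2}\le1, \] and in particular $|w_1-z_0|+|w_2-z_0|\ge|z_1-z_0|$. Consequently $PAP\restriction\mathrm{ran}\,P$ has at most one eigenvalue in $\{w:|w-z_0|<\tfrac12|z_1-z_0|\}$.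
   Context: $\mathrm{cvh}$ denotes the (closed) convex hull. For $u,v\in\mathbb{C}$, $u\cdot v=\mathrm{Re}(u\bar v)$ is the Euclidean inner product on $\mathbb{C}\cong\mathbb{R}^2$. *)

theory Defs
  imports "HOL-Analysis.Analysis"
begin

text \<open>A complex Hilbert space, encoded as a real Hilbert space (real inner product,
complete) equipped with an orthogonal complex structure J (multiplication by i).\<close>

class chilbert = real_inner + complete_space +
  fixes jmult :: "'a \<Rightarrow> 'a"
  assumes jmult_add: "jmult (x + y) = jmult x + jmult y"
    and jmult_scaleR: "jmult (r *\<^sub>R x) = r *\<^sub>R jmult x"
    and jmult_jmult: "jmult (jmult x) = - x"
    and jmult_inner: "jmult x \<bullet> jmult y = x \<bullet> y"

definition cscale :: "complex \<Rightarrow> 'a::chilbert \<Rightarrow> 'a" where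
  "cscale z x = Re z *\<^sub>R x + Im z *\<^sub>R jmult x"

definition cinner :: "'a::chilbert \<Rightarrow> 'a \<Rightarrow> complex" where
  "cinner x y = Complex (x \<bullet> y) (x \<bullet> jmult y)"

definition bounded_clinear_op :: "('a::chilbert \<Rightarrow> 'a) \<Rightarrow> bool" where
  "bounded_clinear_op T \<longleftrightarrow> bounded_linear T \<and> (\<forall>z x. T (cscale z x) = cscale z (T x))"

definition is_adjoint :: "('a::chilbert \<Rightarrow> 'a) \<Rightarrow> ('a \<Rightarrow> 'a) \<Rightarrow> bool" where
  "is_adjoint T S \<longleftrightarrow> (\<forall>x y. cinner (T x) y = cinner x (S y))"

definition normal_op :: "('a::chilbert \<Rightarrow> 'a) \<Rightarrow> bool" where
  "normal_op T \<longleftrightarrow> bounded_clinear_op T \<and>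
     (\<exists>S. bounded_clinear_op S \<and> is_adjoint T S \<and> T \<circ> S = S \<circ> T)"

definition orth_proj :: "('a::chilbert \<Rightarrow> 'a) \<Rightarrow> bool" where
  "orth_proj P \<longleftrightarrow> bounded_clinear_op P \<and> P \<circ> P = P \<and> is_adjoint P P"

definition spec :: "('a::chilbert \<Rightarrow> 'a) \<Rightarrow> complex set" where
  "spec T = {z. \<not> (\<exists>B. bounded_clinear_op B \<and>
                 B \<circ> (\<lambda>x. T x - cscale z x) = id \<and> (\<lambda>x. T x - cscale z x) \<circ> B = id)}"

definition eigenspace :: "('a::chilbert \<Rightarrow> 'a) \<Rightarrow> complex \<Rightarrow> 'a set" where
  "eigenspace T z = {x. T x = cscale z x}"

definition is_eigenvalue :: "('a::chilbert \<Rightarrow> 'a) \<Rightarrow> complex \<Rightarrow> bool" where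
  "is_eigenvalue T z \<longleftrightarrow> (\<exists>x. x \<noteq> 0 \<and> T x = cscale z x)"

definition simple_eigenvalue :: "('a::chilbert \<Rightarrow> 'a) \<Rightarrow> complex \<Rightarrow> bool" where
  "simple_eigenvalue T z \<longleftrightarrow> (\<exists>v. v \<noteq> 0 \<and> eigenspace T z = range (\<lambda>c. cscale c v))"

definition is_compr_eigenvalue :: "('a::chilbert \<Rightarrow> 'a) \<Rightarrow> ('a \<Rightarrow> 'a) \<Rightarrow> complex \<Rightarrow> bool" where
  "is_compr_eigenvalue P A w \<longleftrightarrow> (\<exists>x \<in> range P. x \<noteq> 0 \<and> P (A (P x)) = cscale w x)"

text \<open>Euclidean inner product on C = R^2.\<close>
definition cdot :: "complex \<Rightarrow> complex \<Rightarrow> real" where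
  "cdot u v = Re (u * cnj v)"

end

theory Submission
  imports Defs "HOL-Complex_Analysis.Complex_Analysis" "HOL-Computational_Algebra.Fundamental_Theorem_Algebra"
begin

context chilbert begin
subclass banach ..
end

lemma norm_jmult[simp]: "norm (jmult (x::'a::chilbert)) = norm x"
  by (simp add: norm_eq_sqrt_inner jmult_inner)
lemma bounded_linear_jmult: "bounded_linear (jmult :: 'a::chilbert \<Rightarrow> 'a)"
  by (rule bounded_linear_intro[where K=1]) (auto simp: jmult_add jmult_scaleR)
lemma jmult_zero[simp]: "jmult (0::'a::chilbert) = 0"
  by (rule linear_0[OF bounded_linear.linear[OF bounded_linear_jmult]])
lemma jmult_minus[simp]: "jmult (- (x::'a::chilbert)) = - jmult x"
  by (rule linear_neg[OF bounded_linear.linear[OF bounded_linear_jmult]])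
lemma jmult_diff: "jmult ((x::'a::chilbert) - y) = jmult x - jmult y"
  by (rule linear_diff[OF bounded_linear.linear[OF bounded_linear_jmult]])
lemma jmult_inner_swap: "jmult (x::'a::chilbert) \<bullet> y = - (x \<bullet> jmult y)"
proof -
  have "jmult x \<bullet> y = jmult (jmult x) \<bullet> jmult y" by (simp add: jmult_inner)
  also have "\<dots> = - (x \<bullet> jmult y)" by (simp add: jmult_jmult)
  finally show ?thesis .
qed
lemma inner_jmult_self[simp]: "(x::'a::chilbert) \<bullet> jmult x = 0"
  using jmult_inner_swap[of x x] by (simp add: inner_commute)

lemma cscale_add1: "cscale (a + b) x = cscale a x + cscale b (x::'a::chilbert)"
  by (simp add: cscale_def algebra_simps)
lemma cscale_add2: "cscale a (x + y) = cscale a x + cscale a (y::'a::chilbert)"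
  by (simp add: cscale_def algebra_simps jmult_add)
lemma cscale_diff1: "cscale (a - b) x = cscale a x - cscale b (x::'a::chilbert)"
  by (simp add: cscale_def algebra_simps)
lemma cscale_diff2: "cscale a (x - y) = cscale a x - cscale a (y::'a::chilbert)"
  by (simp add: cscale_def algebra_simps jmult_diff)
lemma cscale_minus1: "cscale (- a) x = - cscale a (x::'a::chilbert)"
  by (simp add: cscale_def algebra_simps)
lemma cscale_minus2: "cscale a (- x) = - cscale a (x::'a::chilbert)"
  by (simp add: cscale_def algebra_simps)
lemma cscale_zero1[simp]: "cscale 0 x = (0::'a::chilbert)"
  by (simp add: cscale_def)
lemma cscale_zero2[simp]: "cscale a 0 = (0::'a::chilbert)"
  by (simp add: cscale_def)
lemma cscale_one[simp]: "cscale 1 x = (x::'a::chilbert)"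
  by (simp add: cscale_def)
lemma cscale_of_real[simp]: "cscale (of_real r) x = r *\<^sub>R (x::'a::chilbert)"
  by (simp add: cscale_def)
lemma cscale_scaleR: "cscale a (r *\<^sub>R x) = r *\<^sub>R cscale a (x::'a::chilbert)"
  by (simp add: cscale_def algebra_simps jmult_scaleR)
lemma jmult_cscale: "jmult (cscale a x) = cscale a (jmult (x::'a::chilbert))"
  by (simp add: cscale_def jmult_add jmult_scaleR jmult_jmult algebra_simps)
lemma cscale_cscale: "cscale a (cscale b x) = cscale (a * b) (x::'a::chilbert)"
  by (simp add: cscale_def jmult_add jmult_scaleR jmult_jmult algebra_simps scaleR_add_left[symmetric]
      del: scaleR_add_left)
lemma cscale_sum2: "cscale a (sum f S) = sum (\<lambda>i. cscale a (f i)) (S::'b set) " for f :: "'b \<Rightarrow> 'a::chilbert"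
  by (induct S rule: infinite_finite_induct) (auto simp: cscale_add2)
lemma cscale_sum1: "cscale (sum f S) x = sum (\<lambda>i. cscale (f i) x) (S::'b set) " for x :: "'a::chilbert"
  by (induct S rule: infinite_finite_induct) (auto simp: cscale_add1)
lemma bounded_linear_cscale: "bounded_linear (cscale a :: 'a::chilbert \<Rightarrow> 'a)"
  unfolding cscale_def
  by (intro bounded_linear_add bounded_linear_scaleR_right bounded_linear_compose[OF _ bounded_linear_jmult]
      bounded_linear_ident)

lemma norm_cscale[simp]: "norm (cscale a x) = cmod a * norm (x::'a::chilbert)"
proof -
  have "(norm (cscale a x))^2 = cscale a x \<bullet> cscale a x"
    by (simp add: power2_norm_eq_inner)
  also have "\<dots> = (Re a)^2 * (x \<bullet> x) + (Im a)^2 * (jmult x \<bullet> jmult x)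
      + 2 * Re a * Im a * (x \<bullet> jmult x)"
    by (simp add: cscale_def inner_add_left inner_add_right inner_commute[of "jmult x" x]
        power2_eq_square algebra_simps)
  also have "\<dots> = (cmod a * norm x)^2"
    by (simp add: jmult_inner cmod_power2 power_mult_distrib algebra_simps power2_norm_eq_inner)
  finally show ?thesis
    by (metis norm_ge_zero mult_nonneg_nonneg power2_eq_imp_eq)
qed

lemma cinner_add1: "cinner (x + y) z = cinner x z + cinner y (z::'a::chilbert)"
  by (simp add: cinner_def complex_eq_iff inner_add_left)
lemma cinner_add2: "cinner x (y + z) = cinner x y + cinner x (z::'a::chilbert)"
  by (simp add: cinner_def complex_eq_iff inner_add_right jmult_add)
lemma cinner_diff1: "cinner (x - y) z = cinner x z - cinner y (z::'a::chilbert)"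
  by (simp add: cinner_def complex_eq_iff inner_diff_left)
lemma cinner_diff2: "cinner x (y - z) = cinner x y - cinner x (z::'a::chilbert)"
  by (simp add: cinner_def complex_eq_iff inner_diff_right jmult_diff)
lemma cinner_zero1[simp]: "cinner 0 (x::'a::chilbert) = 0"
  by (simp add: cinner_def complex_eq_iff)
lemma cinner_zero2[simp]: "cinner x (0::'a::chilbert) = 0"
  by (simp add: cinner_def complex_eq_iff)
lemma cinner_cscale1: "cinner (cscale a x) y = a * cinner x (y::'a::chilbert)"
  by (simp add: cinner_def complex_eq_iff cscale_def inner_add_left jmult_inner_swap jmult_jmult algebra_simps)
lemma cinner_commute: "cinner y x = cnj (cinner x (y::'a::chilbert))"
  by (simp add: cinner_def complex_eq_iff inner_commute) (metis inner_commute jmult_inner_swap)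
lemma cinner_cscale2: "cinner x (cscale a y) = cnj a * cinner x (y::'a::chilbert)"
proof -
  have "cinner x (cscale a y) = cnj (cinner (cscale a y) x)" by (rule cinner_commute)
  also have "\<dots> = cnj a * cnj (cinner y x)" by (simp add: cinner_cscale1)
  also have "cnj (cinner y x) = cinner x y" by (simp add: cinner_commute[of x y])
  finally show ?thesis .
qed

lemma cinner_self: "cinner x x = of_real ((norm (x::'a::chilbert))^2)"
  by (simp add: cinner_def complex_eq_iff power2_norm_eq_inner)
lemma Re_cinner: "Re (cinner x y) = x \<bullet> (y::'a::chilbert)"
  by (simp add: cinner_def)
lemma cinner_sum1: "cinner (sum f S) y = (\<Sum>i\<in>S. cinner (f i) (y::'a::chilbert))"
  by (induct S rule: infinite_finite_induct) (auto simp: cinner_add1)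

lemma cinner_cauchy_schwarz: "cmod (cinner x y) \<le> norm x * norm (y::'a::chilbert)"
proof (cases "cinner x y = 0")
  case True then show ?thesis by simp
next
  case False
  define a where "a = cnj (cinner x y) / cmod (cinner x y)"
  have ca: "cmod a = 1" using False by (simp add: a_def norm_divide)
  have "cinner (cscale a x) y = of_real (cmod (cinner x y))"
  proof -
    have "cnj (cinner x y) * cinner x y = of_real ((cmod (cinner x y))^2)"
      by (metis complex_norm_square mult.commute)
    then show ?thesis using False
      by (simp add: cinner_cscale1 a_def power2_eq_square)
  qed
  then have "cmod (cinner x y) = cscale a x \<bullet> y"
    by (metis Re_cinner Re_complex_of_real)
  also have "\<dots> \<le> norm (cscale a x) * norm y" by (rule norm_cauchy_schwarz)
  finally show ?thesis using ca by simp
qed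

lemma cinner_eq_zero_imp: "(\<And>y. cinner x y = 0) \<Longrightarrow> x = (0::'a::chilbert)"
  by (metis cinner_self of_real_eq_0_iff power_eq_0_iff norm_eq_zero)

lemma bounded_linear_cinner1: "bounded_linear (\<lambda>x. cinner x (y::'a::chilbert))"
  by (rule bounded_linear_intro[where K="norm y"])
     (auto simp: cinner_add1 cinner_cscale1[of "of_real r" for r, simplified] cinner_cauchy_schwarz
        scaleR_conv_of_real)

section \<open>Bounded complex-linear operators\<close>

definition invertible_op :: "('a::chilbert \<Rightarrow> 'a) \<Rightarrow> bool" where
  "invertible_op T \<longleftrightarrow> (\<exists>B. bounded_clinear_op B \<and> B \<circ> T = id \<and> T \<circ> B = id)"

lemma spec_iff: "z \<in> spec T \<longleftrightarrow> \<not> invertible_op (\<lambda>x. T x - cscale z x)"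
  by (simp add: spec_def invertible_op_def)

lemma bclin_bl: "bounded_clinear_op T \<Longrightarrow> bounded_linear T"
  by (simp add: bounded_clinear_op_def)
lemma bclin_cscale: "bounded_clinear_op T \<Longrightarrow> T (cscale z x) = cscale z (T x)"
  by (simp add: bounded_clinear_op_def)
lemma bclin_add: "bounded_clinear_op T \<Longrightarrow> T (x + y) = T x + T y"
  by (rule linear_add[OF bounded_linear.linear[OF bclin_bl]])
lemma bclin_diff: "bounded_clinear_op T \<Longrightarrow> T (x - y) = T x - T y"
  by (rule linear_diff[OF bounded_linear.linear[OF bclin_bl]])
lemma bclin_zero: "bounded_clinear_op T \<Longrightarrow> T 0 = 0"
  by (rule linear_0[OF bounded_linear.linear[OF bclin_bl]])
lemma bclin_minus: "bounded_clinear_op T \<Longrightarrow> T (- x) = - T x"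
  by (rule linear_neg[OF bounded_linear.linear[OF bclin_bl]])
lemma bclin_sum: "bounded_clinear_op T \<Longrightarrow> T (sum f S) = (\<Sum>i\<in>S. T (f i))"
  by (rule linear_sum[OF bounded_linear.linear[OF bclin_bl]])
lemma bclin_scaleR: "bounded_clinear_op T \<Longrightarrow> T (r *\<^sub>R x) = r *\<^sub>R T x"
  by (rule linear_scale[OF bounded_linear.linear[OF bclin_bl]])

lemma bclin_id: "bounded_clinear_op (\<lambda>x. x)"
  by (simp add: bounded_clinear_op_def bounded_linear_ident)
lemma bclin_id': "bounded_clinear_op id"
  by (simp add: bounded_clinear_op_def id_def bounded_linear_ident)
lemma bclin_cscale_op: "bounded_clinear_op (cscale a)"
  by (simp add: bounded_clinear_op_def bounded_linear_cscale cscale_cscale mult.commute)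
lemma bclin_comp: "bounded_clinear_op T \<Longrightarrow> bounded_clinear_op S \<Longrightarrow> bounded_clinear_op (\<lambda>x. T (S x))"
  unfolding bounded_clinear_op_def
  using bounded_linear_compose[of T S] by (simp add: o_def)
lemma bclin_comp': "bounded_clinear_op T \<Longrightarrow> bounded_clinear_op S \<Longrightarrow> bounded_clinear_op (T \<circ> S)"
  using bclin_comp[of T S] by (simp add: o_def)
lemma bclin_plus: "bounded_clinear_op T \<Longrightarrow> bounded_clinear_op S \<Longrightarrow> bounded_clinear_op (\<lambda>x. T x + S x)"
  unfolding bounded_clinear_op_def
  using bounded_linear_add[of T S] by (simp add: cscale_add2)
lemma bclin_minus_op: "bounded_clinear_op T \<Longrightarrow> bounded_clinear_op S \<Longrightarrow> bounded_clinear_op (\<lambda>x. T x - S x)"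
  unfolding bounded_clinear_op_def
  using bounded_linear_sub[of T S] by (simp add: cscale_diff2)
lemma bclin_scal: "bounded_clinear_op T \<Longrightarrow> bounded_clinear_op (\<lambda>x. cscale a (T x))"
  by (rule bclin_comp[OF bclin_cscale_op])
lemma bclin_shift: "bounded_clinear_op T \<Longrightarrow> bounded_clinear_op (\<lambda>x. T x - cscale z x)"
  by (rule bclin_minus_op[OF _ bclin_cscale_op])
lemma bclin_funpow: "bounded_clinear_op T \<Longrightarrow> bounded_clinear_op (T ^^ n)"
  by (induct n) (auto simp: bclin_id' bclin_comp')

lemma bclin_onorm: "bounded_clinear_op T \<Longrightarrow> norm (T x) \<le> onorm T * norm x"
  by (rule onorm[OF bclin_bl])
lemma bclin_onorm_nonneg: "bounded_clinear_op T \<Longrightarrow> 0 \<le> onorm T"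
  by (rule onorm_pos_le[OF bclin_bl])

lemma invertible_opI:
  assumes "bounded_clinear_op B" "\<And>x. B (T x) = x" "\<And>x. T (B x) = x"
  shows "invertible_op T"
  unfolding invertible_op_def using assms by (intro exI[of _ B]) auto

lemma invertible_op_comp:
  assumes "invertible_op F" "invertible_op G"
  shows "invertible_op (\<lambda>x. F (G x))"
proof -
  obtain B where B: "bounded_clinear_op B" "B \<circ> F = id" "F \<circ> B = id"
    using assms(1) by (auto simp: invertible_op_def)
  obtain C where C: "bounded_clinear_op C" "C \<circ> G = id" "G \<circ> C = id"
    using assms(2) by (auto simp: invertible_op_def)
  show ?thesis
  proof (rule invertible_opI[of "\<lambda>x. C (B x)"])
    show "bounded_clinear_op (\<lambda>x. C (B x))" by (rule bclin_comp[OF C(1) B(1)])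
    fix x
    show "C (B (F (G x))) = x" using B(2) C(2) by (metis comp_apply id_apply)
    show "F (G (C (B x))) = x" using B(3) C(3) by (metis comp_apply id_apply)
  qed
qed

lemma invertible_op_cscale: "a \<noteq> 0 \<Longrightarrow> invertible_op (cscale a)"
  by (rule invertible_opI[of "cscale (1/a)"]) (auto simp: bclin_cscale_op cscale_cscale)

lemma invertible_op_inj: "invertible_op T \<Longrightarrow> T x = 0 \<Longrightarrow> bounded_clinear_op T \<Longrightarrow> x = 0"
  unfolding invertible_op_def by (metis bclin_zero comp_apply id_apply)

section \<open>Adjoints and normality\<close>

lemma adj_sym: "is_adjoint T S \<Longrightarrow> cinner (S x) y = cinner x (T y)"
  unfolding is_adjoint_def by (metis cinner_commute)

lemma normal_adj_norm:
  assumes "is_adjoint T S" "T \<circ> S = S \<circ> T"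
  shows "norm (S x) = norm (T x)"
proof -
  have c: "T (S z) = S (T z)" for z using assms(2) by (metis comp_apply)
  have "complex_of_real ((norm (S x))^2) = cinner (S x) (S x)" by (simp add: cinner_self)
  also have "\<dots> = cinner x (T (S x))" by (rule adj_sym[OF assms(1)])
  also have "\<dots> = cinner x (S (T x))" by (simp add: c)
  also have "\<dots> = cnj (cinner (S (T x)) x)" by (rule cinner_commute)
  also have "cinner (S (T x)) x = cinner (T x) (T x)" by (rule adj_sym[OF assms(1)])
  also have "cnj (cinner (T x) (T x)) = complex_of_real ((norm (T x))^2)" by (simp add: cinner_self)
  finally have "(norm (S x))^2 = (norm (T x))^2" by (simp only: of_real_eq_iff)
  then show ?thesis by (simp add: power2_eq_imp_eq)
qed

lemma normal_sq:
  assumes "is_adjoint T S" "T \<circ> S = S \<circ> T"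
  shows "(norm (T x))^2 \<le> norm x * norm (T (T x))"
proof -
  have "(norm (T x))^2 = Re (cinner (T x) (T x))" by (simp add: cinner_self)
  also have "\<dots> = Re (cinner x (S (T x)))" using assms(1) by (simp add: is_adjoint_def)
  also have "\<dots> = x \<bullet> S (T x)" by (rule Re_cinner)
  also have "\<dots> \<le> norm x * norm (S (T x))" by (rule norm_cauchy_schwarz)
  also have "norm (S (T x)) = norm (T (T x))" by (rule normal_adj_norm[OF assms])
  finally show ?thesis .
qed

lemma commute_funpow: "(\<And>x. T (S x) = S (T x)) \<Longrightarrow> (T ^^ n) (S x) = S ((T ^^ n) x)"
  by (induct n) auto

lemma adjoint_funpow: "is_adjoint T S \<Longrightarrow> is_adjoint (T ^^ n) (S ^^ n)"
proof (induct n)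
  case 0 then show ?case by (simp add: is_adjoint_def)
next
  case (Suc n)
  show ?case unfolding is_adjoint_def
  proof (intro allI)
    fix x y
    have "cinner ((T ^^ Suc n) x) y = cinner (T ((T ^^ n) x)) y" by simp
    also have "\<dots> = cinner ((T ^^ n) x) (S y)" using Suc(2) by (simp add: is_adjoint_def)
    also have "\<dots> = cinner x ((S ^^ n) (S y))" using Suc(1)[OF Suc(2)] by (simp add: is_adjoint_def)
    also have "(S ^^ n) (S y) = (S ^^ Suc n) y" by (simp add: funpow_Suc_right del: funpow.simps)
    finally show "cinner ((T ^^ Suc n) x) y = cinner x ((S ^^ Suc n) y)" .
  qed
qed

lemma normal_funpow:
  assumes "normal_op T" shows "normal_op (T ^^ n)"
proof -
  obtain S where S: "bounded_clinear_op S" "is_adjoint T S" "T \<circ> S = S \<circ> T"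
    using assms by (auto simp: normal_op_def)
  have c: "T (S z) = S (T z)" for z using S(3) by (metis comp_apply)
  have c1: "(T ^^ n) (S z) = S ((T ^^ n) z)" for z by (rule commute_funpow[of T S, OF c])
  have c2: "(S ^^ n) ((T ^^ n) z) = (T ^^ n) ((S ^^ n) z)" for z
    by (rule commute_funpow) (simp add: c1)
  show ?thesis unfolding normal_op_def
    using assms S by (auto simp: normal_op_def bclin_funpow adjoint_funpow c2 fun_eq_iff intro!: exI[of _ "S ^^ n"])
qed

lemma normal_opE:
  assumes "normal_op T"
  obtains S where "bounded_clinear_op T" "bounded_clinear_op S" "is_adjoint T S" "T \<circ> S = S \<circ> T"
  using assms by (auto simp: normal_op_def)

section \<open>Neumann series\<close>

lemma funpow_bound:
  fixes T :: "'a::real_normed_vector \<Rightarrow> 'a"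
  assumes "\<And>x. norm (T x) \<le> q * norm x" "0 \<le> q"
  shows "norm ((T ^^ n) x) \<le> q ^ n * norm x"
proof (induct n)
  case 0
  show ?case by simp
next
  case (Suc n)
  have "norm ((T ^^ Suc n) x) = norm (T ((T ^^ n) x))" by simp
  also have "\<dots> \<le> q * norm ((T ^^ n) x)" by (rule assms(1))
  also have "\<dots> \<le> q * (q ^ n * norm x)" by (rule mult_left_mono[OF Suc assms(2)])
  finally show ?case by simp
qed

lemma neumann:
  fixes T :: "'a::chilbert \<Rightarrow> 'a"
  assumes bc: "bounded_clinear_op T" and q: "0 \<le> q" "q < 1" and bd: "\<And>x. norm (T x) \<le> q * norm x"
  defines "N \<equiv> \<lambda>x. (\<Sum>n. (T ^^ n) x)"
  shows "\<And>x. summable (\<lambda>n. (T ^^ n) x)"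
    and "bounded_clinear_op N"
    and "\<And>x. N x - T (N x) = x"
    and "\<And>x. N (x - T x) = x"
proof -
  have pb: "norm ((T ^^ n) x) \<le> q ^ n * norm x" for n x by (rule funpow_bound[OF bd q(1)])
  have sg: "summable (\<lambda>n. q ^ n * norm x)" for x
    by (rule summable_mult2) (rule summable_geometric, simp add: q)
  have smn: "summable (\<lambda>n. norm ((T ^^ n) x))" for x
    by (rule summable_comparison_test'[OF sg[of x]]) (simp add: pb)
  show sm: "summable (\<lambda>n. (T ^^ n) x)" for x
    by (rule summable_norm_cancel[OF smn])
  have bcn: "bounded_clinear_op (T ^^ n)" for n by (rule bclin_funpow[OF bc])
  have Nadd: "N (x + y) = N x + N y" for x y
    unfolding N_def using suminf_add[OF sm[of x] sm[of y]] by (simp add: bclin_add[OF bcn])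
  have Ncs: "N (cscale a x) = cscale a (N x)" for a x
    unfolding N_def using bounded_linear.suminf[OF bounded_linear_cscale sm[of x], of a]
    by (simp add: bclin_cscale[OF bcn])
  have Nbd: "norm (N x) \<le> norm x * (1 / (1 - q))" for x
  proof -
    have "norm (N x) \<le> (\<Sum>n. norm ((T ^^ n) x))" unfolding N_def by (rule summable_norm[OF smn])
    also have "\<dots> \<le> (\<Sum>n. q ^ n * norm x)" by (rule suminf_le[OF pb smn sg])
    also have "\<dots> = (\<Sum>n. q ^ n) * norm x" by (rule suminf_mult2[symmetric]) (rule summable_geometric, simp add: q)
    also have "\<dots> = norm x * (1 / (1 - q))" using q by (simp add: suminf_geometric)
    finally show ?thesis .
  qed
  show "bounded_clinear_op N"
    unfolding bounded_clinear_op_def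
  proof (intro conjI allI)
    show "bounded_linear N"
      by (rule bounded_linear_intro[where K="1 / (1 - q)"])
         (auto simp: Nadd Ncs[of "of_real r" for r, simplified] Nbd[simplified])
  qed (rule Ncs)
  have TN: "T (\<Sum>n. (T ^^ n) x) = (\<Sum>n. T ((T ^^ n) x))" for x
    using bounded_linear.suminf[OF bclin_bl[OF bc] sm[of x]] by simp
  show "N x - T (N x) = x" for x
    using suminf_split_head[OF sm[of x]] unfolding N_def TN by simp
  show "N (x - T x) = x" for x
  proof -
    have "N (x - T x) = N x - N (T x)"
      unfolding N_def using suminf_diff[OF sm[of x] sm[of "T x"]] by (simp add: bclin_diff[OF bcn])
    also have "N (T x) = (\<Sum>n. (T ^^ Suc n) x)"
      unfolding N_def by (simp add: funpow_Suc_right del: funpow.simps)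
    finally show ?thesis
      using suminf_split_head[OF sm[of x]] by (simp add: N_def)
  qed
qed

lemma neumann_inv:
  fixes T :: "'a::chilbert \<Rightarrow> 'a"
  assumes "bounded_clinear_op T" "0 \<le> q" "q < 1" "\<And>x. norm (T x) \<le> q * norm x"
  shows "invertible_op (\<lambda>x. x - T x)"
  using neumann[OF assms] by (intro invertible_opI[of "\<lambda>x. (\<Sum>n. (T ^^ n) x)"]) auto

lemma spec_bound:
  fixes A :: "'a::chilbert \<Rightarrow> 'a"
  assumes bc: "bounded_clinear_op A" and mu: "cmod \<mu> > onorm A"
  shows "\<mu> \<notin> spec A"
proof -
  have onn: "0 \<le> onorm A" by (rule bclin_onorm_nonneg[OF bc])
  then have mu0: "\<mu> \<noteq> 0" using mu by auto
  define T where "T = (\<lambda>x. cscale (1/\<mu>) (A x))"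
  have bT: "bounded_clinear_op T" unfolding T_def by (rule bclin_scal[OF bc])
  have "norm (T x) \<le> (onorm A / cmod \<mu>) * norm x" for x
    using bclin_onorm[OF bc, of x] mu0 by (simp add: T_def norm_divide field_simps)
  then have inv: "invertible_op (\<lambda>x. x - T x)"
    using mu onn mu0 by (intro neumann_inv[OF bT, of "onorm A / cmod \<mu>"]) (auto simp: field_simps)
  have eq: "(\<lambda>x. A x - cscale \<mu> x) = (\<lambda>x. cscale (- \<mu>) (x - T x))"
    using mu0 by (auto simp: fun_eq_iff T_def cscale_diff2 cscale_cscale cscale_minus1)
  have "invertible_op (\<lambda>x. A x - cscale \<mu> x)"
    unfolding eq by (rule invertible_op_comp[OF invertible_op_cscale inv]) (use mu0 in simp)
  then show ?thesis by (simp add: spec_iff)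
qed

section \<open>Resolvent of I - zeta T\<close>

locale resolv =
  fixes T :: "'a::chilbert \<Rightarrow> 'a" and \<rho> :: real
  assumes bcT: "bounded_clinear_op T" and rpos: "0 < \<rho>"
    and inv: "\<And>\<zeta>. cmod \<zeta> < \<rho> \<Longrightarrow> invertible_op (\<lambda>x. x - cscale \<zeta> (T x))"
begin

definition R :: "complex \<Rightarrow> 'a \<Rightarrow> 'a" where
  "R \<zeta> = (SOME B. bounded_clinear_op B \<and> B \<circ> (\<lambda>x. x - cscale \<zeta> (T x)) = id
                 \<and> (\<lambda>x. x - cscale \<zeta> (T x)) \<circ> B = id)"

lemma R_props:
  assumes "cmod \<zeta> < \<rho>"
  shows "bounded_clinear_op (R \<zeta>)" "\<And>x. R \<zeta> (x - cscale \<zeta> (T x)) = x"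
    "\<And>x. R \<zeta> x - cscale \<zeta> (T (R \<zeta> x)) = x"
proof -
  have "\<exists>B. bounded_clinear_op B \<and> B \<circ> (\<lambda>x. x - cscale \<zeta> (T x)) = id
                 \<and> (\<lambda>x. x - cscale \<zeta> (T x)) \<circ> B = id"
    using inv[OF assms] unfolding invertible_op_def .
  then have h: "bounded_clinear_op (R \<zeta>) \<and> R \<zeta> \<circ> (\<lambda>x. x - cscale \<zeta> (T x)) = id
                 \<and> (\<lambda>x. x - cscale \<zeta> (T x)) \<circ> R \<zeta> = id"
    unfolding R_def by (rule someI_ex)
  then show "bounded_clinear_op (R \<zeta>)" by simp
  fix x
  from h show "R \<zeta> (x - cscale \<zeta> (T x)) = x" by (metis comp_apply id_apply)
  from h show "R \<zeta> x - cscale \<zeta> (T (R \<zeta> x)) = x" by (metis comp_apply id_apply)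
qed

lemma res_id:
  assumes z: "cmod \<zeta> < \<rho>" and e: "cmod \<eta> < \<rho>"
  shows "R \<zeta> x - R \<eta> x = cscale (\<zeta> - \<eta>) (R \<zeta> (T (R \<eta> x)))"
proof -
  define w where "w = R \<eta> x"
  have x: "x = w - cscale \<eta> (T w)" using R_props(3)[OF e, of x] by (simp add: w_def)
  have "x = (w - cscale \<zeta> (T w)) + cscale (\<zeta> - \<eta>) (T w)"
    using x by (simp add: cscale_diff1 algebra_simps)
  then have "R \<zeta> x = R \<zeta> (w - cscale \<zeta> (T w)) + R \<zeta> (cscale (\<zeta> - \<eta>) (T w))"
    by (metis bclin_add[OF R_props(1)[OF z]])
  also have "\<dots> = w + cscale (\<zeta> - \<eta>) (R \<zeta> (T w))"
    by (simp add: R_props(2)[OF z] bclin_cscale[OF R_props(1)[OF z]])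
  finally show ?thesis by (simp add: w_def)
qed

lemma R_bound: "cmod \<zeta> < \<rho> \<Longrightarrow> norm (R \<zeta> x) \<le> onorm (R \<zeta>) * norm x"
  by (rule bclin_onorm[OF R_props(1)])

lemma local_bound:
  assumes z: "cmod \<zeta> < \<rho>" and e: "cmod \<eta> < \<rho>"
    and small: "cmod (\<eta> - \<zeta>) * onorm T * onorm (R \<zeta>) \<le> 1/2"
  shows "onorm (R \<eta>) \<le> 2 * onorm (R \<zeta>)"
proof -
  have Tn: "0 \<le> onorm T" by (rule bclin_onorm_nonneg[OF bcT])
  have Kz: "0 \<le> onorm (R \<zeta>)" by (rule bclin_onorm_nonneg[OF R_props(1)[OF z]])
  have Ke: "0 \<le> onorm (R \<eta>)" by (rule bclin_onorm_nonneg[OF R_props(1)[OF e]])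
  have "norm (R \<eta> x) \<le> (onorm (R \<zeta>) + onorm (R \<eta>) / 2) * norm x" for x
  proof -
    have d: "R \<eta> x - R \<zeta> x = cscale (\<eta> - \<zeta>) (R \<eta> (T (R \<zeta> x)))" by (rule res_id[OF e z])
    have "norm (R \<eta> (T (R \<zeta> x))) \<le> onorm (R \<eta>) * (onorm T * (onorm (R \<zeta>) * norm x))"
    proof -
      have "norm (R \<eta> (T (R \<zeta> x))) \<le> onorm (R \<eta>) * norm (T (R \<zeta> x))" by (rule R_bound[OF e])
      also have "\<dots> \<le> onorm (R \<eta>) * (onorm T * norm (R \<zeta> x))"
        by (rule mult_left_mono[OF bclin_onorm[OF bcT] Ke])
      also have "\<dots> \<le> onorm (R \<eta>) * (onorm T * (onorm (R \<zeta>) * norm x))"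
        by (intro mult_left_mono R_bound[OF z] Tn Ke)
      finally show ?thesis .
    qed
    then have "norm (R \<eta> x - R \<zeta> x) \<le> cmod (\<eta> - \<zeta>) * (onorm (R \<eta>) * (onorm T * (onorm (R \<zeta>) * norm x)))"
      unfolding d by (simp add: mult_left_mono)
    also have "\<dots> = onorm (R \<eta>) * norm x * (cmod (\<eta> - \<zeta>) * onorm T * onorm (R \<zeta>))"
      by (simp add: algebra_simps)
    also have "\<dots> \<le> onorm (R \<eta>) * norm x * (1/2)"
      by (intro mult_left_mono small) (simp add: Ke)
    finally have "norm (R \<eta> x - R \<zeta> x) \<le> onorm (R \<eta>) * norm x / 2" by simp
    moreover have "norm (R \<eta> x) \<le> norm (R \<zeta> x) + norm (R \<eta> x - R \<zeta> x)"
      by (metis add.commute diff_add_cancel norm_triangle_ineq)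
    moreover have "norm (R \<zeta> x) \<le> onorm (R \<zeta>) * norm x" by (rule R_bound[OF z])
    ultimately show ?thesis by (simp add: algebra_simps)
  qed
  then have "onorm (R \<eta>) \<le> onorm (R \<zeta>) + onorm (R \<eta>) / 2"
    by (intro onorm_bound) (use Kz Ke in auto)
  then show ?thesis by simp
qed

lemma R_tendsto:
  assumes z: "cmod \<zeta> < \<rho>"
  shows "((\<lambda>\<eta>. R \<eta> w) \<longlongrightarrow> R \<zeta> w) (at \<zeta>)"
proof -
  define K where "K = onorm (R \<zeta>)"
  define Tn where "Tn = onorm T"
  have Tn: "0 \<le> Tn" unfolding Tn_def by (rule bclin_onorm_nonneg[OF bcT])
  have K: "0 \<le> K" unfolding K_def by (rule bclin_onorm_nonneg[OF R_props(1)[OF z]])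
  define \<delta> where "\<delta> = min (\<rho> - cmod \<zeta>) (1 / (2 * (Tn * K + 1)))"
  have "0 < Tn * K + 1" using Tn K by (simp add: add_nonneg_pos)
  then have dpos: "0 < \<delta>" using z by (simp add: \<delta>_def)
  define C where "C = 2 * K * (Tn * (K * norm w))"
  have ev: "eventually (\<lambda>\<eta>. norm (R \<eta> w - R \<zeta> w) \<le> cmod (\<eta> - \<zeta>) * C) (at \<zeta>)"
    unfolding eventually_at
  proof (intro exI[of _ \<delta>] conjI ballI impI)
    show "0 < \<delta>" by (rule dpos)
    fix \<eta> :: complex assume "\<eta> \<in> UNIV" "\<eta> \<noteq> \<zeta> \<and> dist \<eta> \<zeta> < \<delta>"
    then have d: "cmod (\<eta> - \<zeta>) < \<delta>" by (simp add: dist_norm)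
    have e: "cmod \<eta> < \<rho>"
      using d norm_triangle_ineq2[of \<eta> \<zeta>] by (simp add: \<delta>_def)
    have "cmod (\<eta> - \<zeta>) * (Tn * K) \<le> (1 / (2 * (Tn * K + 1))) * (Tn * K)"
      using d Tn K by (intro mult_right_mono) (auto simp: \<delta>_def)
    also have "\<dots> \<le> 1/2"
    proof -
      have p: "0 \<le> Tn * K" using Tn K by simp
      then have "Tn * K / (Tn * K + 1) \<le> 1" by (simp add: divide_le_eq)
      then have "(Tn * K / (Tn * K + 1)) / 2 \<le> 1 / 2" by (rule divide_right_mono) simp
      moreover have "1 / (2 * (Tn * K + 1)) * (Tn * K) = (Tn * K / (Tn * K + 1)) / 2"
        by simp
      ultimately show ?thesis by (simp only:)
    qed
    finally have sm: "cmod (\<eta> - \<zeta>) * onorm T * onorm (R \<zeta>) \<le> 1/2"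
      by (simp add: Tn_def K_def mult.assoc)
    have lb: "onorm (R \<eta>) \<le> 2 * K" unfolding K_def by (rule local_bound[OF z e sm])
    have "R \<eta> w - R \<zeta> w = cscale (\<eta> - \<zeta>) (R \<eta> (T (R \<zeta> w)))" by (rule res_id[OF e z])
    then have "norm (R \<eta> w - R \<zeta> w) = cmod (\<eta> - \<zeta>) * norm (R \<eta> (T (R \<zeta> w)))" by simp
    also have "norm (R \<eta> (T (R \<zeta> w))) \<le> C"
    proof -
      have "norm (R \<eta> (T (R \<zeta> w))) \<le> onorm (R \<eta>) * norm (T (R \<zeta> w))" by (rule R_bound[OF e])
      also have "\<dots> \<le> (2 * K) * (Tn * (K * norm w))"
      proof (rule mult_mono[OF lb])
        have "norm (T (R \<zeta> w)) \<le> Tn * norm (R \<zeta> w)" unfolding Tn_def by (rule bclin_onorm[OF bcT])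
        also have "\<dots> \<le> Tn * (K * norm w)" unfolding K_def by (intro mult_left_mono R_bound[OF z] Tn)
        finally show "norm (T (R \<zeta> w)) \<le> Tn * (K * norm w)" .
      qed (use K in auto)
      finally show ?thesis by (simp add: C_def)
    qed
    finally show "norm (R \<eta> w - R \<zeta> w) \<le> cmod (\<eta> - \<zeta>) * C" by (simp add: mult_left_mono)
  qed
  have "((\<lambda>\<eta>. cmod (\<eta> - \<zeta>) * C) \<longlongrightarrow> cmod (\<zeta> - \<zeta>) * C) (at \<zeta>)"
    by (intro tendsto_intros)
  then have "((\<lambda>\<eta>. cmod (\<eta> - \<zeta>) * C) \<longlongrightarrow> 0) (at \<zeta>)" by simp
  then have "((\<lambda>\<eta>. R \<eta> w - R \<zeta> w) \<longlongrightarrow> 0) (at \<zeta>)" by (rule Lim_null_comparison[OF ev])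
  then show ?thesis by (rule LIM_zero_cancel)
qed

lemma phi_deriv:
  assumes z: "cmod \<zeta> < \<rho>"
  shows "((\<lambda>\<eta>. cinner (R \<eta> y) y') has_field_derivative cinner (R \<zeta> (T (R \<zeta> y))) y') (at \<zeta>)"
  unfolding has_field_derivative_iff
proof (rule Lim_transform_eventually)
  show "((\<lambda>\<eta>. cinner (R \<eta> (T (R \<zeta> y))) y') \<longlongrightarrow> cinner (R \<zeta> (T (R \<zeta> y))) y') (at \<zeta>)"
    by (rule bounded_linear.tendsto[OF bounded_linear_cinner1 R_tendsto[OF z]])
  show "eventually (\<lambda>\<eta>. cinner (R \<eta> (T (R \<zeta> y))) y' =
          (cinner (R \<eta> y) y' - cinner (R \<zeta> y) y') / (\<eta> - \<zeta>)) (at \<zeta>)"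
    unfolding eventually_at
  proof (intro exI[of _ "\<rho> - cmod \<zeta>"] conjI ballI impI)
    show "0 < \<rho> - cmod \<zeta>" using z by simp
    fix \<eta> :: complex assume "\<eta> \<in> UNIV" "\<eta> \<noteq> \<zeta> \<and> dist \<eta> \<zeta> < \<rho> - cmod \<zeta>"
    then have ne: "\<eta> \<noteq> \<zeta>" and e: "cmod \<eta> < \<rho>"
      using norm_triangle_ineq2[of \<eta> \<zeta>] by (auto simp: dist_norm)
    have "cinner (R \<eta> y) y' - cinner (R \<zeta> y) y' = cinner (R \<eta> y - R \<zeta> y) y'"
      by (simp add: cinner_diff1)
    also have "\<dots> = (\<eta> - \<zeta>) * cinner (R \<eta> (T (R \<zeta> y))) y'"
      by (simp add: res_id[OF e z] cinner_cscale1)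
    finally show "cinner (R \<eta> (T (R \<zeta> y))) y' = (cinner (R \<eta> y) y' - cinner (R \<zeta> y) y') / (\<eta> - \<zeta>)"
      using ne by simp
  qed
qed

lemma phi_holo: "(\<lambda>\<eta>. cinner (R \<eta> y) y') holomorphic_on ball 0 \<rho>"
proof (subst holomorphic_on_open)
  show "\<forall>x\<in>ball 0 \<rho>. \<exists>f'. ((\<lambda>\<eta>. cinner (R \<eta> y) y') has_field_derivative f') (at x)"
  proof
    fix x :: complex assume "x \<in> ball 0 \<rho>"
    then have "cmod x < \<rho>" by simp
    then show "\<exists>f'. ((\<lambda>\<eta>. cinner (R \<eta> y) y') has_field_derivative f') (at x)"
      using phi_deriv[of x y y'] by blast
  qed
qed simp

lemma R_neumann:
  assumes sm: "cmod \<zeta> * onorm T < 1" and z: "cmod \<zeta> < \<rho>"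
  shows "summable (\<lambda>n. cscale (\<zeta>^n) ((T^^n) y))" "R \<zeta> y = (\<Sum>n. cscale (\<zeta>^n) ((T^^n) y))"
proof -
  define T' where "T' = (\<lambda>x. cscale \<zeta> (T x))"
  have bT': "bounded_clinear_op T'" unfolding T'_def by (rule bclin_scal[OF bcT])
  have bd: "norm (T' x) \<le> (cmod \<zeta> * onorm T) * norm x" for x
    unfolding T'_def using bclin_onorm[OF bcT, of x]
    by (simp add: mult.assoc mult_left_mono)
  have q0: "0 \<le> cmod \<zeta> * onorm T" using bclin_onorm_nonneg[OF bcT] by simp
  have pw: "(T' ^^ n) x = cscale (\<zeta>^n) ((T^^n) x)" for n x
    by (induct n) (auto simp: T'_def bclin_cscale[OF bcT] cscale_cscale mult.commute)
  note N = neumann[OF bT' q0 sm bd]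
  show "summable (\<lambda>n. cscale (\<zeta>^n) ((T^^n) y))" using N(1)[of y] by (simp add: pw)
  have "R \<zeta> y = R \<zeta> ((\<Sum>n. (T' ^^ n) y) - cscale \<zeta> (T (\<Sum>n. (T' ^^ n) y)))"
    using N(3)[of y] by (simp add: T'_def)
  also have "\<dots> = (\<Sum>n. (T' ^^ n) y)" by (rule R_props(2)[OF z])
  finally show "R \<zeta> y = (\<Sum>n. cscale (\<zeta>^n) ((T^^n) y))" by (simp add: pw)
qed

lemma phi_fps:
  "(\<lambda>\<eta>. cinner (R \<eta> y) y') has_fps_expansion Abs_fps (\<lambda>n. cinner ((T^^n) y) y')"
proof -
  define Tn where "Tn = onorm T"
  have Tn: "0 \<le> Tn" unfolding Tn_def by (rule bclin_onorm_nonneg[OF bcT])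
  define \<epsilon> where "\<epsilon> = 1 / (Tn + 1)"
  have epos: "0 < \<epsilon>" using Tn by (simp add: \<epsilon>_def)
  have eT: "Tn * \<epsilon> < 1" using Tn by (simp add: \<epsilon>_def field_simps)
  have cb: "cmod (cinner ((T^^n) y) y') \<le> (norm y * norm y') * Tn ^ n" for n
  proof -
    have "cmod (cinner ((T^^n) y) y') \<le> norm ((T^^n) y) * norm y'" by (rule cinner_cauchy_schwarz)
    also have "\<dots> \<le> (Tn ^ n * norm y) * norm y'"
      by (intro mult_right_mono funpow_bound[OF _ Tn]) (auto simp: Tn_def bclin_onorm[OF bcT])
    finally show ?thesis by (simp add: algebra_simps)
  qed
  have "summable (\<lambda>n. cinner ((T^^n) y) y' * (of_real \<epsilon>)^n)"
  proof (rule summable_comparison_test')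
    show "summable (\<lambda>n. (norm y * norm y') * (Tn * \<epsilon>) ^ n)"
      by (rule summable_mult, rule summable_geometric) (use Tn epos eT in simp)
    fix n
    show "norm (cinner ((T^^n) y) y' * (of_real \<epsilon>)^n) \<le> (norm y * norm y') * (Tn * \<epsilon>) ^ n"
      using cb[of n] epos
      by (simp add: norm_mult norm_power power_mult_distrib mult.assoc mult_right_mono)
  qed
  then have cr: "conv_radius (\<lambda>n. cinner ((T^^n) y) y') \<ge> norm (of_real \<epsilon> :: complex)"
    by (rule conv_radius_geI)
  have rad: "fps_conv_radius (Abs_fps (\<lambda>n. cinner ((T^^n) y) y')) > 0"
  proof -
    have "(0::ereal) < ereal \<epsilon>" using epos by simp
    also have "ereal \<epsilon> \<le> conv_radius (\<lambda>n. cinner ((T^^n) y) y')" using cr epos by simp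
    finally show ?thesis unfolding fps_conv_radius_def by simp
  qed
  have ev: "eventually (\<lambda>z. eval_fps (Abs_fps (\<lambda>n. cinner ((T^^n) y) y')) z = cinner (R z y) y') (nhds 0)"
    unfolding eventually_nhds_metric
  proof (intro exI[of _ "min \<epsilon> \<rho>"] conjI allI impI)
    show "0 < min \<epsilon> \<rho>" using epos rpos by simp
    fix z :: complex assume "dist z 0 < min \<epsilon> \<rho>"
    then have z1: "cmod z < \<epsilon>" and z2: "cmod z < \<rho>" by auto
    have "cmod z * Tn \<le> \<epsilon> * Tn" using z1 Tn by (intro mult_right_mono) auto
    then have sm: "cmod z * onorm T < 1" using eT by (simp add: Tn_def mult.commute)
    note RN = R_neumann[OF sm z2, of y]
    have "cinner (R z y) y' = (\<Sum>n. cinner (cscale (z^n) ((T^^n) y)) y')"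
      unfolding RN(2) by (rule bounded_linear.suminf[OF bounded_linear_cinner1 RN(1)])
    also have "\<dots> = (\<Sum>n. cinner ((T^^n) y) y' * z ^ n)"
      by (simp add: cinner_cscale1 mult.commute)
    finally show "eval_fps (Abs_fps (\<lambda>n. cinner ((T^^n) y) y')) z = cinner (R z y) y'"
      by (simp add: eval_fps_def)
  qed
  show ?thesis unfolding has_fps_expansion_def using rad ev by simp
qed

lemma phi_coeff: "(deriv ^^ n) (\<lambda>\<eta>. cinner (R \<eta> y) y') 0 = fact n * cinner ((T^^n) y) y'"
  using fps_nth_fps_expansion[OF phi_fps[of y y'], of n] by (simp add: field_simps)

lemma cauchy_bound:
  assumes s: "0 < s" "s < \<rho>"
  shows "\<exists>K\<ge>0. \<forall>n. norm ((T^^n) y) \<le> K / s^n"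
proof -
  have cont: "continuous_on (cball 0 s) (\<lambda>\<eta>. R \<eta> y)"
    by (rule continuous_at_imp_continuous_on) (use s in \<open>auto simp: isCont_def intro!: R_tendsto\<close>)
  have "bounded ((\<lambda>\<eta>. R \<eta> y) ` cball 0 s)"
    by (rule compact_imp_bounded, rule compact_continuous_image[OF cont compact_cball])
  then obtain K0 where K0': "\<forall>x\<in>(\<lambda>\<eta>. R \<eta> y) ` cball 0 s. norm x \<le> K0"
    unfolding Elementary_Metric_Spaces.bounded_iff by blast
  have K0: "\<And>\<eta>. \<eta> \<in> cball 0 s \<Longrightarrow> norm (R \<eta> y) \<le> K0" using K0' by blast
  define K where "K = max K0 0"
  have K: "0 \<le> K" "\<And>\<eta>. \<eta> \<in> cball 0 s \<Longrightarrow> norm (R \<eta> y) \<le> K"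
    using K0 by (force simp: K_def le_max_iff_disj)+
  have "norm ((T^^n) y) \<le> K / s^n" for n
  proof -
    define v where "v = (T^^n) y"
    have holo: "(\<lambda>\<eta>. cinner (R \<eta> y) v) holomorphic_on ball 0 \<rho>" by (rule phi_holo)
    have "norm ((deriv ^^ n) (\<lambda>\<eta>. cinner (R \<eta> y) v) 0) \<le> fact n * (K * norm v) / s^n"
    proof (rule Cauchy_inequality)
      show "(\<lambda>\<eta>. cinner (R \<eta> y) v) holomorphic_on ball 0 s"
        by (rule holomorphic_on_subset[OF holo]) (use s in auto)
      show "continuous_on (cball 0 s) (\<lambda>\<eta>. cinner (R \<eta> y) v)"
        by (rule continuous_on_subset[OF holomorphic_on_imp_continuous_on[OF holo]]) (use s in auto)
      show "0 < s" by (rule s)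
      fix x :: complex assume "norm (0 - x) = s"
      then have "x \<in> cball 0 s" by auto
      have "cmod (cinner (R x y) v) \<le> norm (R x y) * norm v" by (rule cinner_cauchy_schwarz)
      also have "\<dots> \<le> K * norm v" by (intro mult_right_mono K(2)[OF \<open>x \<in> cball 0 s\<close>]) auto
      finally show "cmod (cinner (R x y) v) \<le> K * norm v" .
    qed
    then have "fact n * (norm v)^2 \<le> fact n * (K * norm v) / s^n"
      by (simp add: phi_coeff v_def cinner_self norm_mult norm_power)
    then have "fact n * (norm v)^2 \<le> fact n * ((K * norm v) / s^n)" by simp
    then have "(norm v)^2 \<le> (K * norm v) / s^n" by (rule mult_left_le_imp_le) simp
    then have le: "norm v * norm v \<le> (K / s^n) * norm v" by (simp add: power2_eq_square)
    have "norm v \<le> K / s^n"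
    proof (cases "norm v = 0")
      case True then show ?thesis using K(1) s by simp
    next
      case False
      then have "0 < norm v" by simp
      from mult_right_le_imp_le[OF le this] show ?thesis .
    qed
    then show ?thesis by (simp add: v_def)
  qed
  then show ?thesis using K(1) by blast
qed

end

lemma normal_bound_rho:
  fixes T :: "'a::chilbert \<Rightarrow> 'a"
  assumes nT: "normal_op T" and rpos: "0 < \<rho>"
    and inv: "\<And>\<zeta>. cmod \<zeta> < \<rho> \<Longrightarrow> invertible_op (\<lambda>x. x - cscale \<zeta> (T x))"
  shows "norm (T y) * \<rho> \<le> norm y"
proof (rule ccontr)
  assume "\<not> ?thesis"
  then have gt: "norm y < norm (T y) * \<rho>" by simp
  have bcT: "bounded_clinear_op T" using nT by (auto simp: normal_op_def)
  interpret resolv T \<rho> by unfold_locales (use bcT rpos inv in auto)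
  have "0 < norm (T y) * \<rho>" using gt norm_ge_zero[of y] by linarith
  then have Ty0: "0 < norm (T y)" using rpos by (simp add: zero_less_mult_iff)
  have y0: "0 < norm y"
  proof (rule ccontr)
    assume "\<not> 0 < norm y" then have "y = 0" by simp
    then show False using Ty0 bclin_zero[OF bcT] by simp
  qed
  have lt: "norm y / norm (T y) < \<rho>" using gt Ty0 by (simp add: divide_less_eq mult.commute)
  define u where "u = norm y / norm (T y)"
  define s where "s = (u + \<rho>) / 2"
  have u0: "0 \<le> u" by (simp add: u_def)
  have lt': "u < \<rho>" using lt by (simp add: u_def)
  have s01: "0 < s" "s < \<rho>" "u < s"
    using lt' rpos u0 by (simp_all add: s_def)
  have s: "0 < s" "s < \<rho>" "norm y / norm (T y) < s" using s01 by (auto simp: u_def)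
  obtain K where K: "0 \<le> K" "\<And>n. norm ((T^^n) y) \<le> K / s^n"
    using cauchy_bound[OF s(1,2), of y] by blast
  define a where "a = norm (T y) / norm y"
  have apos: "0 < a" using Ty0 y0 by (simp add: a_def)
  have grow: "norm y * a^(2^k) \<le> norm ((T^^(2^k)) y)" for k
  proof (induct k)
    case 0
    show ?case using y0 by (simp add: a_def)
  next
    case (Suc k)
    define U where "U = T ^^ (2^k)"
    have nU: "normal_op U" unfolding U_def by (rule normal_funpow[OF nT])
    then obtain SU where SU: "is_adjoint U SU" "U \<circ> SU = SU \<circ> U" by (auto simp: normal_op_def)
    have sq: "(norm (U y))^2 \<le> norm y * norm (U (U y))" by (rule normal_sq[OF SU])
    have UU: "U (U y) = (T^^(2^Suc k)) y"
      by (simp add: U_def funpow_add mult_2 del: funpow.simps)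
    have IH: "norm y * a^(2^k) \<le> norm (U y)" using Suc by (simp add: U_def)
    have "(norm y * a^(2^k))^2 \<le> (norm (U y))^2"
      by (rule power_mono[OF IH]) (use y0 apos in simp)
    also note sq
    finally have f: "(norm y * a^(2^k))^2 \<le> norm y * norm (U (U y))" .
    have "a^(2^Suc k) = a^(2^k) * a^(2^k)" by (simp add: mult_2 power_add)
    then have "(norm y * a^(2^k))^2 = norm y * (norm y * a^(2^Suc k))"
      by (simp add: power2_eq_square)
    with f have "norm y * (norm y * a^(2^Suc k)) \<le> norm y * norm (U (U y))" by simp
    then have "norm y * a^(2^Suc k) \<le> norm (U (U y))" using y0 by simp
    then show ?case by (simp add: UU)
  qed
  define q where "q = a * s"
  have q1: "1 < q" using s(3) Ty0 y0 by (simp add: q_def a_def field_simps)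
  have bnd: "q^(2^k) \<le> K / norm y" for k
  proof -
    have "norm y * a^(2^k) \<le> K / s^(2^k)" using grow[of k] K(2)[of "2^k"] by linarith
    then have "norm y * a^(2^k) * s^(2^k) \<le> K" using s(1) by (simp add: field_simps)
    then show ?thesis using y0 by (simp add: q_def power_mult_distrib field_simps)
  qed
  obtain n where n: "K / norm y < q^n" using real_arch_pow[OF q1] by blast
  have "q^n \<le> q^(2^n)" by (rule power_increasing) (use q1 less_exp[of n] in auto)
  then show False using n bnd[of n] by linarith
qed

lemma normal_bound:
  fixes T :: "'a::chilbert \<Rightarrow> 'a"
  assumes nT: "normal_op T" and r: "0 \<le> r" and sp: "\<And>\<mu>. r < cmod \<mu> \<Longrightarrow> \<mu> \<notin> spec T"
  shows "norm (T y) \<le> r * norm y"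
proof (rule ccontr)
  assume "\<not> ?thesis"
  then have gt: "r * norm y < norm (T y)" by simp
  have bcT: "bounded_clinear_op T" using nT by (auto simp: normal_op_def)
  have y0: "0 < norm y"
  proof (rule ccontr)
    assume "\<not> 0 < norm y" then have "y = 0" by simp
    then show False using gt bclin_zero[OF bcT] by simp
  qed
  define t where "t = norm (T y) / norm y"
  have rt: "r < t" using gt y0 by (simp add: t_def pos_less_divide_eq)
  define r' where "r' = (r + t) / 2"
  have r'1: "r < r'" "r' < t" "0 < r'" using rt r by (auto simp: r'_def)
  have "r' * norm y < t * norm y" using r'1(2) y0 by simp
  also have "t * norm y = norm (T y)" using y0 by (simp add: t_def)
  finally have r': "r < r'" "r' * norm y < norm (T y)" "0 < r'" using r'1 by auto
  have inv: "invertible_op (\<lambda>x. x - cscale \<zeta> (T x))" if z: "cmod \<zeta> < 1 / r'" for \<zeta>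
  proof (cases "\<zeta> = 0")
    case True
    then show ?thesis by (auto intro!: invertible_opI[of "\<lambda>x. x"] bclin_id)
  next
    case False
    define \<mu> where "\<mu> = 1 / \<zeta>"
    have "r' < cmod \<mu>" using z False r'(3) by (simp add: \<mu>_def norm_divide field_simps)
    then have "\<mu> \<notin> spec T" using r'(1) by (intro sp) simp
    then have iv: "invertible_op (\<lambda>x. T x - cscale \<mu> x)" by (simp add: spec_iff)
    have eq: "(\<lambda>x. x - cscale \<zeta> (T x)) = (\<lambda>x. cscale (- \<zeta>) (T x - cscale \<mu> x))"
      using False by (auto simp: fun_eq_iff \<mu>_def cscale_diff2 cscale_cscale cscale_minus1)
    show ?thesis unfolding eq
      by (rule invertible_op_comp[OF invertible_op_cscale iv]) (use False in simp)
  qed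
  have "norm (T y) * (1 / r') \<le> norm y"
    by (rule normal_bound_rho[OF nT _ inv]) (use r' in auto)
  then show False using r' by (simp add: field_simps)
qed

section \<open>Polynomials of operators\<close>

definition opoly :: "complex poly \<Rightarrow> ('a::chilbert \<Rightarrow> 'a) \<Rightarrow> 'a \<Rightarrow> 'a" where
  "opoly p T x = (\<Sum>i\<le>degree p. cscale (coeff p i) ((T^^i) x))"

lemma opoly_N:
  assumes "degree p \<le> N"
  shows "opoly p T x = (\<Sum>i\<le>N. cscale (coeff p i) ((T^^i) x))"
  unfolding opoly_def
  by (rule sum.mono_neutral_left) (use assms in \<open>auto simp: coeff_eq_0\<close>)

lemma opoly_add: "opoly (p + q) T x = opoly p T x + opoly q T x"
proof -
  define N where "N = max (degree p) (degree q)"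
  have "degree (p + q) \<le> N" by (rule degree_add_le) (auto simp: N_def)
  then show ?thesis
    by (simp add: opoly_N[of _ N] N_def cscale_add1 sum.distrib)
qed

lemma opoly_diff: "opoly (p - q) T x = opoly p T x - opoly q T x"
proof -
  define N where "N = max (degree p) (degree q)"
  have "degree (p - q) \<le> N" by (rule degree_diff_le) (auto simp: N_def)
  then show ?thesis
    by (simp add: opoly_N[of _ N] N_def cscale_diff1 sum_subtractf)
qed

lemma opoly_smult: "opoly (smult c p) T x = cscale c (opoly p T x)"
proof -
  have "degree (smult c p) \<le> degree p" by (rule degree_smult_le)
  then show ?thesis
    by (simp add: opoly_N[of _ "degree p"] cscale_sum2 cscale_cscale opoly_def)
qed

lemma opoly_0[simp]: "opoly 0 T x = 0"
  by (simp add: opoly_def)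

lemma opoly_const: "opoly [:c:] T x = cscale c x"
  by (simp add: opoly_def)

lemma opoly_pCons:
  assumes bc: "bounded_clinear_op T"
  shows "opoly (pCons a p) T x = cscale a x + T (opoly p T x)"
proof -
  have "degree (pCons a p) \<le> Suc (degree p)" by (rule degree_pCons_le)
  then have "opoly (pCons a p) T x = (\<Sum>i\<le>Suc (degree p). cscale (coeff (pCons a p) i) ((T^^i) x))"
    by (rule opoly_N)
  also have "\<dots> = cscale a x + (\<Sum>i\<le>degree p. cscale (coeff p i) ((T^^Suc i) x))"
    by (simp add: sum.atMost_Suc_shift del: sum.atMost_Suc)
  also have "(\<Sum>i\<le>degree p. cscale (coeff p i) ((T^^Suc i) x)) = T (opoly p T x)"
    by (simp add: opoly_def bclin_sum[OF bc] bclin_cscale[OF bc])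
  finally show ?thesis .
qed

lemma opoly_pCons_fun:
  "bounded_clinear_op T \<Longrightarrow> opoly (pCons a p) T = (\<lambda>x. cscale a x + T (opoly p T x))"
  by (simp add: fun_eq_iff opoly_pCons)

lemma opoly_mult:
  assumes bc: "bounded_clinear_op T"
  shows "opoly (p * q) T x = opoly p T (opoly q T x)"
proof (induct p arbitrary: x rule: pCons_induct)
  case 0 then show ?case by simp
next
  case (pCons a p)
  have "opoly (pCons a p * q) T x = opoly (smult a q + pCons 0 (p * q)) T x"
    by (simp add: mult_pCons_left)
  also have "\<dots> = cscale a (opoly q T x) + T (opoly (p * q) T x)"
    by (simp add: opoly_add opoly_smult opoly_pCons[OF bc])
  also have "\<dots> = opoly (pCons a p) T (opoly q T x)"
    by (simp add: opoly_pCons[OF bc] pCons(2))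
  finally show ?case .
qed

lemma bclin_zero_op: "bounded_clinear_op (\<lambda>x::'a::chilbert. 0)"
  by (simp add: bounded_clinear_op_def bounded_linear_zero)

lemma bclin_opoly:
  assumes bc: "bounded_clinear_op T"
  shows "bounded_clinear_op (opoly p T)"
proof (induct p rule: pCons_induct)
  case 0
  have "opoly 0 T = (\<lambda>x. 0)" by (simp add: fun_eq_iff)
  then show ?case by (simp add: bclin_zero_op)
next
  case (pCons a p)
  show ?case unfolding opoly_pCons_fun[OF bc]
    by (intro bclin_plus bclin_cscale_op bclin_comp[OF bc pCons(2)])
qed

lemma opoly_commute:
  assumes bS: "bounded_clinear_op S" and bT: "bounded_clinear_op T"
    and c: "\<And>x. S (T x) = T (S x)"
  shows "S (opoly p T x) = opoly p T (S x)"
proof (induct p arbitrary: x rule: pCons_induct)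
  case 0 then show ?case by (simp add: bclin_zero[OF bS])
next
  case (pCons a p)
  show ?case
    by (simp add: opoly_pCons[OF bT] bclin_add[OF bS] bclin_cscale[OF bS] c pCons(2))
qed

definition pcnj :: "complex poly \<Rightarrow> complex poly" where
  "pcnj p = map_poly cnj p"

lemma pcnj_pCons: "pcnj (pCons a p) = pCons (cnj a) (pcnj p)"
  by (simp add: pcnj_def map_poly_pCons)

lemma pcnj_0[simp]: "pcnj 0 = 0"
  by (simp add: pcnj_def)

lemma poly_pcnj: "poly (pcnj p) (cnj z) = cnj (poly p z)"
  by (induct p rule: pCons_induct) (auto simp: pcnj_pCons)

lemma opoly_adjoint:
  assumes bT: "bounded_clinear_op T" and bS: "bounded_clinear_op S" and adj: "is_adjoint T S"
  shows "is_adjoint (opoly p T) (opoly (pcnj p) S)"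
proof (induct p rule: pCons_induct)
  case 0 then show ?case by (simp add: is_adjoint_def)
next
  case (pCons a p)
  have cm: "S (opoly (pcnj p) S y) = opoly (pcnj p) S (S y)" for y
    by (rule opoly_commute[OF bS bS]) simp
  show ?case unfolding is_adjoint_def
  proof (intro allI)
    fix x y
    have "cinner (opoly (pCons a p) T x) y = a * cinner x y + cinner (opoly p T x) (S y)"
      using adj by (simp add: opoly_pCons[OF bT] cinner_add1 cinner_cscale1 is_adjoint_def)
    also have "cinner (opoly p T x) (S y) = cinner x (opoly (pcnj p) S (S y))"
      using pCons(2) by (simp add: is_adjoint_def)
    also have "a * cinner x y + cinner x (opoly (pcnj p) S (S y)) =
        cinner x (opoly (pcnj (pCons a p)) S y)"
      by (simp add: pcnj_pCons opoly_pCons[OF bS] cinner_add2 cinner_cscale2 cm)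
    finally show "cinner (opoly (pCons a p) T x) y = cinner x (opoly (pcnj (pCons a p)) S y)" .
  qed
qed

lemma normal_opoly:
  assumes nT: "normal_op T"
  shows "normal_op (opoly p T)"
proof -
  obtain S where S: "bounded_clinear_op T" "bounded_clinear_op S" "is_adjoint T S" "T \<circ> S = S \<circ> T"
    by (rule normal_opE[OF nT])
  have c: "S (T x) = T (S x)" for x using S(4) by (metis comp_apply)
  have c1: "S (opoly p T x) = opoly p T (S x)" for x by (rule opoly_commute[OF S(2) S(1) c])
  have c2: "opoly p T (opoly (pcnj p) S x) = opoly (pcnj p) S (opoly p T x)" for x
    by (rule opoly_commute[OF bclin_opoly[OF S(1)] S(2)]) (simp add: c1)
  show ?thesis unfolding normal_op_def
    using S bclin_opoly opoly_adjoint[OF S(1-3)] c2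
    by (auto simp: fun_eq_iff intro!: exI[of _ "opoly (pcnj p) S"])
qed

lemma opoly_eigen:
  assumes bT: "bounded_clinear_op T" and ev: "T v = cscale \<sigma> v"
  shows "opoly p T v = cscale (poly p \<sigma>) v"
  by (induct p rule: pCons_induct)
     (auto simp: opoly_pCons[OF bT] bclin_cscale[OF bT] ev cscale_cscale cscale_add1[symmetric] mult.commute)

lemma opoly_lin:
  assumes bT: "bounded_clinear_op T"
  shows "opoly [:a, b:] T x = cscale a x + cscale b (T x)"
  by (simp add: opoly_pCons[OF bT] opoly_const bclin_cscale[OF bT] bclin_add[OF bT] bclin_zero[OF bT])

lemma opoly_invertible:
  assumes bT: "bounded_clinear_op T"
  shows "q \<noteq> 0 \<Longrightarrow> (\<forall>w\<in>spec T. poly q w \<noteq> 0) \<Longrightarrow> invertible_op (opoly q T)"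
proof (induct "degree q" arbitrary: q rule: less_induct)
  case less
  show ?case
  proof (cases "degree q = 0")
    case True
    define c where "c = coeff q 0"
    have q: "q = [:c:]" using degree_0_id[OF True] by (simp add: c_def)
    have c0: "c \<noteq> 0" using less(2) q by simp
    have "opoly q T = cscale c" by (simp add: fun_eq_iff q opoly_const)
    then show ?thesis using invertible_op_cscale[OF c0] by simp
  next
    case False
    then have "\<not> constant (poly q)" by (simp add: constant_degree)
    then obtain r where r: "poly q r = 0" using fundamental_theorem_of_algebra by blast
    then have "[:-r, 1:] dvd q" by (simp add: poly_eq_0_iff_dvd)
    then obtain q' where q: "q = [:-r, 1:] * q'" by (auto elim: dvdE)
    have q'0: "q' \<noteq> 0" using less(2) q by auto
    have d1: "degree ([:-r, 1:] * q') = degree [:-r,1:] + degree q'"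
      by (rule degree_mult_eq) (use q'0 in auto)
    have dq: "degree q = Suc (degree q')" unfolding q d1 by simp
    have roots: "\<forall>w\<in>spec T. poly q' w \<noteq> 0" using less(3) q by auto
    have inv': "invertible_op (opoly q' T)"
      by (rule less(1)[OF _ q'0 roots]) (simp add: dq)
    have rs: "r \<notin> spec T" using less(3) r by auto
    then have invr: "invertible_op (\<lambda>x. T x - cscale r x)" by (simp add: spec_iff)
    have "opoly q T x = opoly [:-r, 1:] T (opoly q' T x)" for x
      by (simp only: q opoly_mult[OF bT])
    then have "opoly q T = (\<lambda>x. (\<lambda>z. T z - cscale r z) (opoly q' T x))"
      by (simp add: fun_eq_iff opoly_lin[OF bT] cscale_minus1)
    then show ?thesis using invertible_op_comp[OF invr inv'] by simp
  qed
qed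

lemma spec_opoly:
  assumes bT: "bounded_clinear_op T" and ne: "spec T \<noteq> {}" and nr: "\<forall>w\<in>spec T. poly p w \<noteq> \<mu>"
  shows "\<mu> \<notin> spec (opoly p T)"
proof -
  have eq: "(\<lambda>x. opoly p T x - cscale \<mu> x) = opoly (p - [:\<mu>:]) T"
    by (simp add: fun_eq_iff opoly_diff opoly_const)
  obtain w where "w \<in> spec T" using ne by blast
  then have "p - [:\<mu>:] \<noteq> 0" using nr by auto
  moreover have "\<forall>w\<in>spec T. poly (p - [:\<mu>:]) w \<noteq> 0" using nr by auto
  ultimately have "invertible_op (opoly (p - [:\<mu>:]) T)" by (rule opoly_invertible[OF bT])
  then show ?thesis by (simp add: spec_iff eq)
qed

lemma poly_norm_bound:
  assumes nT: "normal_op T" and ne: "spec T \<noteq> {}"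
    and bd: "\<forall>w\<in>spec T. cmod (poly p w) \<le> r"
  shows "norm (opoly p T y) \<le> r * norm y"
proof -
  have bT: "bounded_clinear_op T" using nT by (simp add: normal_op_def)
  obtain w where "w \<in> spec T" using ne by blast
  then have r: "0 \<le> r" using bd by (meson norm_ge_zero order.trans)
  show ?thesis
  proof (rule normal_bound[OF normal_opoly[OF nT] r])
    fix \<mu> :: complex assume "r < cmod \<mu>"
    then have "\<forall>w\<in>spec T. poly p w \<noteq> \<mu>" using bd by force
    then show "\<mu> \<notin> spec (opoly p T)" by (rule spec_opoly[OF bT ne])
  qed
qed

lemma opoly_one[simp]: "opoly 1 T x = x"
  by (simp add: opoly_def)

lemma adjoint_eigen:
  assumes nA: "normal_op A" and S: "bounded_clinear_op S" "is_adjoint A S" "A \<circ> S = S \<circ> A"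
    and ev: "A e = cscale z0 e"
  shows "S e = cscale (cnj z0) e"
proof -
  have bA: "bounded_clinear_op A" using nA by (simp add: normal_op_def)
  have c: "A (S x) = S (A x)" for x using S(3) by (metis comp_apply)
  define A' where "A' = (\<lambda>x. A x - cscale z0 x)"
  define S' where "S' = (\<lambda>x. S x - cscale (cnj z0) x)"
  have adj: "is_adjoint A' S'"
    using S(2) by (simp add: is_adjoint_def A'_def S'_def cinner_diff1 cinner_diff2 cinner_cscale1 cinner_cscale2)
  have com: "A' \<circ> S' = S' \<circ> A'"
  proof (rule ext)
    fix x
    have 1: "A' (S' x) = A (S x) - cscale (cnj z0) (A x) - (cscale z0 (S x) - cscale (z0 * cnj z0) x)"
      by (simp add: A'_def S'_def bclin_diff[OF bA] bclin_cscale[OF bA] cscale_diff2 cscale_cscale)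
    have 2: "S' (A' x) = S (A x) - cscale z0 (S x) - (cscale (cnj z0) (A x) - cscale (cnj z0 * z0) x)"
      by (simp add: A'_def S'_def bclin_diff[OF S(1)] bclin_cscale[OF S(1)] cscale_diff2 cscale_cscale)
    have 3: "cnj z0 * z0 = z0 * cnj z0" by (rule mult.commute)
    show "(A' \<circ> S') x = (S' \<circ> A') x" unfolding comp_apply 1 2 3 c by (simp add: algebra_simps)
  qed
  have "norm (S' e) = norm (A' e)" by (rule normal_adj_norm[OF adj com])
  also have "A' e = 0" by (simp add: A'_def ev)
  finally show ?thesis by (simp add: S'_def)
qed

lemma gap_bound:
  fixes A :: "'a::chilbert \<Rightarrow> 'a"
  assumes nA: "normal_op A"
    and ev: "A e = cscale z0 e" and e1: "norm e = 1"
    and simple: "\<And>x. A x = cscale z0 x \<Longrightarrow> \<exists>\<beta>. x = cscale \<beta> e"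
    and p0: "poly p z0 = \<sigma>0" and r0: "0 \<le> r0" "r0 < cmod \<sigma>0"
    and pb: "\<And>w. w \<in> spec A \<Longrightarrow> w \<noteq> z0 \<Longrightarrow> cmod (poly p w) \<le> r0"
    and y: "cinner y e = 0"
  shows "norm (opoly p A y) \<le> r0 * norm y"
proof -
  obtain S where S: "bounded_clinear_op A" "bounded_clinear_op S" "is_adjoint A S" "A \<circ> S = S \<circ> A"
    by (rule normal_opE[OF nA])
  note bA = S(1)
  have Se: "S e = cscale (cnj z0) e" by (rule adjoint_eigen[OF nA S(2-4) ev])
  have s0: "\<sigma>0 \<noteq> 0" using r0 by auto
  have z0s: "z0 \<in> spec A"
  proof -
    have "\<not> invertible_op (\<lambda>x. A x - cscale z0 x)"
    proof
      assume "invertible_op (\<lambda>x. A x - cscale z0 x)"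
      then have "e = 0" by (rule invertible_op_inj) (auto simp: ev bclin_shift[OF bA])
      then show False using e1 by simp
    qed
    then show ?thesis by (simp add: spec_iff)
  qed
  then have ne: "spec A \<noteq> {}" by auto
  define \<rho> where "\<rho> = r0 / cmod \<sigma>0"
  have \<rho>: "0 \<le> \<rho>" "\<rho> < 1" using r0 s0 by (auto simp: \<rho>_def divide_less_eq)
  define h where "h = smult (1 / \<sigma>0) p"
  define g where "g = (\<lambda>n. h ^ n)"
  have gz0: "poly (g n) z0 = 1" for n using s0 by (simp add: g_def h_def poly_power p0)
  have gw: "cmod (poly (g n) w) \<le> \<rho> ^ n" if "w \<in> spec A" "w \<noteq> z0" for n w
  proof -
    have "cmod (poly h w) \<le> \<rho>" using pb[OF that] s0
      by (simp add: h_def \<rho>_def norm_divide divide_right_mono)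
    then show ?thesis
      by (simp add: g_def poly_power norm_power power_mono)
  qed
  define u where "u = (\<lambda>n. opoly (g n) A y)"
  have ud: "norm (u n - u m) \<le> (\<rho>^n + \<rho>^m) * norm y" for n m
  proof -
    have "u n - u m = opoly (g n - g m) A y" by (simp add: u_def opoly_diff)
    also have "norm \<dots> \<le> (\<rho>^n + \<rho>^m) * norm y"
    proof (rule poly_norm_bound[OF nA ne], intro ballI)
      fix w assume w: "w \<in> spec A"
      show "cmod (poly (g n - g m) w) \<le> \<rho>^n + \<rho>^m"
      proof (cases "w = z0")
        case True then show ?thesis using \<rho> by (simp add: gz0)
      next
        case False
        have "cmod (poly (g n - g m) w) \<le> cmod (poly (g n) w) + cmod (poly (g m) w)"
          by (simp add: norm_triangle_ineq4)
        also have "\<dots> \<le> \<rho>^n + \<rho>^m" using gw[OF w False] by (intro add_mono) auto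
        finally show ?thesis .
      qed
    qed
    finally show ?thesis .
  qed
  have "Cauchy u"
  proof (rule CauchyI)
    fix \<epsilon> :: real assume ep: "0 < \<epsilon>"
    obtain M where M: "\<rho>^M < \<epsilon> / (2 * norm y + 1)"
      using real_arch_pow_inv[of "\<epsilon> / (2 * norm y + 1)" \<rho>] ep \<rho> by (auto simp: add_nonneg_pos)
    show "\<exists>M. \<forall>m\<ge>M. \<forall>n\<ge>M. norm (u m - u n) < \<epsilon>"
    proof (intro exI[of _ M] allI impI)
      fix m n assume mn: "M \<le> m" "M \<le> n"
      have "\<rho>^m \<le> \<rho>^M" "\<rho>^n \<le> \<rho>^M" using mn \<rho> by (auto intro: power_decreasing)
      then have "(\<rho>^m + \<rho>^n) * norm y \<le> (2 * \<rho>^M) * norm y" by (intro mult_right_mono) auto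
      also have "\<dots> \<le> \<rho>^M * (2 * norm y + 1)" using \<rho> by (simp add: algebra_simps)
      also have "\<dots> < \<epsilon>" using M by (simp add: pos_less_divide_eq add_nonneg_pos)
      finally show "norm (u m - u n) < \<epsilon>" using ud[of m n] by linarith
    qed
  qed
  then obtain L where L: "u \<longlonglongrightarrow> L" unfolding Cauchy_convergent_iff convergent_def by blast
  \<comment> \<open>the limit is an eigenvector\<close>
  define K1 where "K1 = onorm A + cmod z0"
  have v: "norm (A (u n) - cscale z0 (u n)) \<le> (K1 * \<rho>^n) * norm y" for n
  proof -
    have "A (u n) - cscale z0 (u n) = opoly ([:-z0, 1:] * g n) A y"
      by (simp only: u_def opoly_mult[OF bA] opoly_lin[OF bA]) (simp add: cscale_minus1)
    also have "norm \<dots> \<le> (K1 * \<rho>^n) * norm y"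
    proof (rule poly_norm_bound[OF nA ne], intro ballI)
      fix w assume w: "w \<in> spec A"
      show "cmod (poly ([:-z0, 1:] * g n) w) \<le> K1 * \<rho>^n"
      proof (cases "w = z0")
        case True
        have "0 \<le> K1" using bclin_onorm_nonneg[OF bA] by (simp add: K1_def)
        then show ?thesis using True \<rho> by simp
      next
        case False
        have "cmod w \<le> onorm A" using spec_bound[OF bA, of w] w by force
        then have "cmod (w - z0) \<le> K1" unfolding K1_def by (meson add_mono norm_triangle_ineq4 order.trans order_refl)
        have "poly ([:-z0, 1:] * g n) w = (w - z0) * poly (g n) w" by (simp add: algebra_simps)
        then have "cmod (poly ([:-z0, 1:] * g n) w) = cmod (w - z0) * cmod (poly (g n) w)"
          by (simp add: norm_mult)
        also have "\<dots> \<le> K1 * \<rho>^n"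
          using gw[OF w False, of n] \<open>cmod (w - z0) \<le> K1\<close>
          using bclin_onorm_nonneg[OF bA] by (intro mult_mono) (auto simp: K1_def)
        finally show ?thesis .
      qed
    qed
    finally show ?thesis .
  qed
  have "(\<lambda>n. (K1 * \<rho>^n) * norm y) \<longlonglongrightarrow> (K1 * 0) * norm y"
    using \<rho> by (intro tendsto_intros) simp
  then have lim0: "(\<lambda>n. (K1 * \<rho>^n) * norm y) \<longlonglongrightarrow> 0" by simp
  have evv: "\<forall>n. norm (A (u n) - cscale z0 (u n)) \<le> (K1 * \<rho>^n) * norm y" using v by blast
  have "(\<lambda>n. A (u n) - cscale z0 (u n)) \<longlonglongrightarrow> 0"
    by (rule Lim_null_comparison[OF always_eventually[OF evv] lim0])
  moreover have "(\<lambda>n. A (u n) - cscale z0 (u n)) \<longlonglongrightarrow> A L - cscale z0 L"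
    by (intro tendsto_diff bounded_linear.tendsto[OF bclin_bl[OF bA] L]
        bounded_linear.tendsto[OF bounded_linear_cscale L])
  ultimately have "0 = A L - cscale z0 L" by (rule LIMSEQ_unique)
  then have "A L = cscale z0 L" by simp
  then obtain \<beta> where \<beta>: "L = cscale \<beta> e" using simple by blast
  have ue: "cinner (u n) e = 0" for n
  proof -
    have "cinner (u n) e = cinner y (opoly (pcnj (g n)) S e)"
      using opoly_adjoint[OF S(1-3), of "g n"] by (simp add: u_def is_adjoint_def)
    also have "\<dots> = 0" by (simp add: opoly_eigen[OF S(2) Se] cinner_cscale2 y)
    finally show ?thesis .
  qed
  have "(\<lambda>n. cinner (u n) e) \<longlonglongrightarrow> cinner L e"
    by (rule bounded_linear.tendsto[OF bounded_linear_cinner1 L])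
  then have "cinner L e = 0" using ue by (simp add: LIMSEQ_const_iff)
  then have "\<beta> = 0" using e1 by (simp add: \<beta> cinner_cscale1 cinner_self)
  then have L0: "L = 0" by (simp add: \<beta>)
  have w: "norm (opoly p A (y - u n)) \<le> (r0 * (1 + \<rho>^n)) * norm y" for n
  proof -
    have "opoly p A (y - u n) = opoly (p * (1 - g n)) A y"
      by (simp add: opoly_mult[OF bA] opoly_diff u_def)
    also have "norm \<dots> \<le> (r0 * (1 + \<rho>^n)) * norm y"
    proof (rule poly_norm_bound[OF nA ne], intro ballI)
      fix w assume w: "w \<in> spec A"
      show "cmod (poly (p * (1 - g n)) w) \<le> r0 * (1 + \<rho>^n)"
      proof (cases "w = z0")
        case True then show ?thesis using r0 \<rho> by (simp add: gz0)
      next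
        case False
        have "cmod (1 - poly (g n) w) \<le> 1 + \<rho>^n"
          using norm_triangle_ineq4[of 1 "poly (g n) w"] gw[OF w False, of n] by simp
        then show ?thesis using pb[OF w False] r0
          by (simp add: norm_mult mult_mono)
      qed
    qed
    finally show ?thesis .
  qed
  have "(\<lambda>n. norm (opoly p A (y - u n))) \<longlonglongrightarrow> norm (opoly p A (y - L))"
    by (intro tendsto_norm bounded_linear.tendsto[OF bclin_bl[OF bclin_opoly[OF bA]]]
        tendsto_diff tendsto_const L)
  moreover have "(\<lambda>n. (r0 * (1 + \<rho>^n)) * norm y) \<longlonglongrightarrow> (r0 * (1 + 0)) * norm y"
    using \<rho> by (intro tendsto_intros) simp
  ultimately have "norm (opoly p A (y - L)) \<le> (r0 * (1 + 0)) * norm y"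
    by (rule LIMSEQ_le) (use w in auto)
  then show ?thesis by (simp add: L0)
qed

lemma nearest_inner:
  fixes C :: "'a::real_inner set"
  assumes cv: "convex C" and z1: "z1 \<in> C" and w: "w \<in> C"
    and near: "\<forall>x\<in>C. norm (z0 - z1) \<le> norm (x - z0)"
  shows "(w - z1) \<bullet> (z0 - z1) \<le> 0"
proof (rule ccontr)
  assume "\<not> ?thesis"
  then have X: "0 < (w - z1) \<bullet> (z0 - z1)" by simp
  define X where "X = (w - z1) \<bullet> (z0 - z1)"
  define V where "V = (norm (w - z1))^2"
  have V: "0 \<le> V" by (simp add: V_def)
  define t where "t = min 1 (X / (V + 1))"
  have t: "0 < t" "t \<le> 1" using X V by (auto simp: t_def X_def)
  have tV: "t * V < 2 * X"
  proof -
    have "t * V \<le> (X / (V + 1)) * V" using V by (intro mult_right_mono) (auto simp: t_def)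
    also have "\<dots> = X * (V / (V + 1))" by simp
    also have "\<dots> \<le> X * 1" using X V by (intro mult_left_mono) (auto simp: X_def)
    finally show ?thesis using X by (simp add: X_def)
  qed
  have pt: "(1 - t) *\<^sub>R z1 + t *\<^sub>R w \<in> C" by (rule convexD[OF cv z1 w]) (use t in auto)
  have eq: "(1 - t) *\<^sub>R z1 + t *\<^sub>R w - z0 = (z1 - z0) + t *\<^sub>R (w - z1)"
    by (simp add: algebra_simps)
  have iX: "(z1 - z0) \<bullet> (w - z1) = - X"
    by (metis X_def inner_commute inner_minus_right minus_diff_eq)
  have "(norm ((z1 - z0) + t *\<^sub>R (w - z1)))^2
      = ((z1 - z0) + t *\<^sub>R (w - z1)) \<bullet> ((z1 - z0) + t *\<^sub>R (w - z1))"
    by (rule power2_norm_eq_inner)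
  also have "\<dots> = (z1 - z0) \<bullet> (z1 - z0) + 2 * t * ((z1 - z0) \<bullet> (w - z1)) + t^2 * ((w - z1) \<bullet> (w - z1))"
    by (simp add: inner_add_left inner_add_right inner_diff_left inner_diff_right inner_commute power2_eq_square algebra_simps)
  also have "\<dots> = (norm (z1 - z0))^2 - 2 * t * X + t^2 * V"
    by (simp add: iX V_def power2_norm_eq_inner)
  also have "\<dots> < (norm (z1 - z0))^2"
  proof -
    have "t^2 * V < 2 * t * X" using tV t by (simp add: power2_eq_square mult.assoc)
    then show ?thesis by simp
  qed
  finally have lt: "norm ((z1 - z0) + t *\<^sub>R (w - z1)) < norm (z1 - z0)"
    by (simp add: power_less_imp_less_base)
  have "norm (z0 - z1) \<le> norm ((1 - t) *\<^sub>R z1 + t *\<^sub>R w - z0)" using near pt by blast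
  then show False using lt by (simp add: eq norm_minus_commute)
qed

lemma Re_mult_cnj_inner: "Re (a * cnj b) = a \<bullet> (b::complex)"
  by (simp add: inner_complex_def)

lemma K_lemma:
  fixes A :: "'a::chilbert \<Rightarrow> 'a"
  assumes nA: "normal_op A"
    and ev: "A e = cscale z0 e" and e1: "norm e = 1"
    and simple: "\<And>x. A x = cscale z0 x \<Longrightarrow> \<exists>\<beta>. x = cscale \<beta> e"
    and cz: "c * (z0 - z1) = 1"
    and hp: "\<And>w. w \<in> spec A \<Longrightarrow> w \<noteq> z0 \<Longrightarrow> Re (c * (w - z1)) \<le> 0"
    and M0: "0 \<le> M" and Mb: "\<And>w. w \<in> spec A \<Longrightarrow> cmod (c * (w - z1)) \<le> M"
    and y: "cinner y e = 0"
  shows "Re (c * cinner (A y - cscale z1 y) y) \<le> 0"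
proof -
  have bA: "bounded_clinear_op A" using nA by (simp add: normal_op_def)
  define X where "X = Re (c * cinner (A y - cscale z1 y) y)"
  define ly where "ly = cscale c (A y - cscale z1 y)"
  have Xly: "y \<bullet> ly = X"
    by (metis X_def Re_cinner cinner_cscale1 inner_commute ly_def)
  have key: "2 * a * X \<le> M^2 * (norm y)^2" if a: "M^2 + 1 \<le> a" for a
  proof -
    have a0: "0 \<le> a" using a by (smt (verit) zero_le_power2)
    define p where "p = [:of_real a - c * z1, c:]"
    have pw: "poly p w = of_real a + c * (w - z1)" for w by (simp add: p_def algebra_simps)
    have pz0: "poly p z0 = of_real (a + 1)" by (simp add: pw cz)
    define r0 where "r0 = sqrt (M^2 + a^2)"
    have r00: "0 \<le> r0" by (simp add: r0_def)
    have "M^2 < 2 * a + 1" using a zero_le_power2[of M] by linarith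
    moreover have "(a + 1)^2 = a^2 + 2 * a + 1" by (simp add: power2_eq_square algebra_simps)
    ultimately have "M^2 + a^2 < (a + 1)^2" by linarith
    then have "r0 < sqrt ((a + 1)^2)" unfolding r0_def by (rule real_sqrt_less_mono)
    then have r0lt: "r0 < cmod (of_real (a + 1))" using a0 by simp
    have pb: "cmod (poly p w) \<le> r0" if w: "w \<in> spec A" "w \<noteq> z0" for w
    proof -
      define l where "l = c * (w - z1)"
      have Rl: "Re l \<le> 0" using hp[OF w] by (simp add: l_def)
      have Ml: "(cmod l)^2 \<le> M^2" using Mb[OF w(1)] by (simp add: l_def power_mono)
      have "(cmod (poly p w))^2 = (a + Re l)^2 + (Im l)^2" by (simp add: pw l_def cmod_power2)
      also have "\<dots> = a^2 + 2 * a * Re l + ((Re l)^2 + (Im l)^2)" by (simp add: power2_eq_square algebra_simps)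
      also have "\<dots> = a^2 + 2 * a * Re l + (cmod l)^2" by (simp add: cmod_power2)
      also have "\<dots> \<le> a^2 + M^2" using Rl Ml a0 by (smt (verit) mult_nonneg_nonpos)
      finally show ?thesis unfolding r0_def by (intro real_le_rsqrt) (simp add: add.commute)
    qed
    have gb: "norm (opoly p A y) \<le> r0 * norm y"
      by (rule gap_bound[OF nA ev e1 simple pz0 r00 r0lt pb y]) auto
    have op: "opoly p A y = a *\<^sub>R y + ly"
      by (simp add: p_def opoly_lin[OF bA] ly_def cscale_diff1 cscale_diff2 cscale_cscale)
    have "(norm (a *\<^sub>R y + ly))^2 = (a *\<^sub>R y + ly) \<bullet> (a *\<^sub>R y + ly)"
      by (rule power2_norm_eq_inner)
    also have "\<dots> = a^2 * (y \<bullet> y) + 2 * a * (y \<bullet> ly) + ly \<bullet> ly"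
      by (simp add: inner_add_left inner_add_right inner_commute[of ly y] power2_eq_square algebra_simps)
    also have "\<dots> = a^2 * (norm y)^2 + 2 * a * X + (norm ly)^2"
      by (simp add: Xly power2_norm_eq_inner)
    finally have "(norm (a *\<^sub>R y + ly))^2 = a^2 * (norm y)^2 + 2 * a * X + (norm ly)^2" .
    moreover have "(norm (a *\<^sub>R y + ly))^2 \<le> (r0 * norm y)^2"
      using gb op by (simp add: power_mono)
    moreover have "(r0 * norm y)^2 = (M^2 + a^2) * (norm y)^2"
      by (simp add: r0_def power_mult_distrib)
    moreover have "(M^2 + a^2) * (norm y)^2 = M^2 * (norm y)^2 + a^2 * (norm y)^2"
      by (simp add: algebra_simps)
    moreover have "0 \<le> (norm ly)^2" by simp
    ultimately show ?thesis by linarith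
  qed
  show ?thesis
  proof (rule ccontr)
    assume "\<not> ?thesis"
    then have X0: "0 < X" by (simp add: X_def)
    define a where "a = M^2 + 1 + M^2 * (norm y)^2 / X"
    have "0 \<le> M^2 * (norm y)^2 / X" using X0 by simp
    then have "M^2 + 1 \<le> a" by (simp add: a_def)
    from key[OF this] have "2 * a * X \<le> M^2 * (norm y)^2" .
    moreover have "2 * a * X = 2 * (M^2 + 1) * X + 2 * (M^2 * (norm y)^2)"
      using X0 by (simp add: a_def field_simps)
    moreover have "0 < (M^2 + 1) * X" using X0 by (simp add: add_nonneg_pos)
    moreover have "0 \<le> M^2 * (norm y)^2" by simp
    ultimately show False by linarith
  qed
qed

lemma cinner_self_norm1: "norm e = 1 \<Longrightarrow> cinner e e = 1"
  by (simp add: cinner_self)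

lemma Re_mult_cnj_self: "Re (b * cnj b) = (cmod b)^2"
  by (simp add: complex_norm_square[symmetric])

lemma L_lemma:
  fixes A :: "'a::chilbert \<Rightarrow> 'a"
  assumes nA: "normal_op A"
    and ev: "A e = cscale z0 e" and e1: "norm e = 1"
    and cz: "c * (z0 - z1) = 1"
    and K: "\<And>y. cinner y e = 0 \<Longrightarrow> Re (c * cinner (A y - cscale z1 y) y) \<le> 0"
  shows "Re (c * cinner (A x - cscale z1 x) x) \<le> (cmod (cinner x e))^2"
proof -
  obtain S where S: "bounded_clinear_op A" "bounded_clinear_op S" "is_adjoint A S" "A \<circ> S = S \<circ> A"
    by (rule normal_opE[OF nA])
  note bA = S(1)
  have Se: "S e = cscale (cnj z0) e" by (rule adjoint_eigen[OF nA S(2-4) ev])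
  have ee: "cinner e e = 1" by (rule cinner_self_norm1[OF e1])
  define \<beta> where "\<beta> = cinner x e"
  define y where "y = x - cscale \<beta> e"
  have xeq: "x = y + cscale \<beta> e" by (simp add: y_def)
  have ye: "cinner y e = 0" by (simp add: y_def cinner_diff1 cinner_cscale1 ee \<beta>_def)
  have ey: "cinner e y = 0" using ye by (metis cinner_commute complex_cnj_zero)
  have Aye: "cinner (A y) e = 0"
    using S(3) by (simp add: is_adjoint_def Se cinner_cscale2 ye)
  define D where "D = A y - cscale z1 y"
  have Dx: "A x - cscale z1 x = D + cscale (\<beta> * (z0 - z1)) e"
    by (simp add: D_def xeq bclin_add[OF bA] bclin_cscale[OF bA] ev cscale_add2 cscale_cscale
        cscale_diff1 algebra_simps)
  have De: "cinner D e = 0" by (simp add: D_def cinner_diff1 Aye cinner_cscale1 ye)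
  have "cinner (A x - cscale z1 x) x = cinner (D + cscale (\<beta> * (z0 - z1)) e) (y + cscale \<beta> e)"
    unfolding Dx by (simp only: xeq[symmetric])
  also have "\<dots> = cinner D y + cinner D (cscale \<beta> e)
      + cinner (cscale (\<beta> * (z0 - z1)) e) y + cinner (cscale (\<beta> * (z0 - z1)) e) (cscale \<beta> e)"
    by (simp add: cinner_add1 cinner_add2)
  also have "\<dots> = cinner D y + (\<beta> * cnj \<beta>) * (z0 - z1)"
    by (simp add: cinner_cscale1 cinner_cscale2 De ey ee)
  finally have E: "cinner (A x - cscale z1 x) x = cinner D y + (\<beta> * cnj \<beta>) * (z0 - z1)" .
  have "c * cinner (A x - cscale z1 x) x = c * cinner D y + \<beta> * cnj \<beta>"
    by (simp only: E distrib_left mult.left_commute[of c] cz mult_1_right)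
  then have "Re (c * cinner (A x - cscale z1 x) x) = Re (c * cinner D y) + (cmod \<beta>)^2"
    by (simp only: plus_complex.sel Re_mult_cnj_self)
  moreover have "Re (c * cinner D y) \<le> 0" unfolding D_def by (rule K[OF ye])
  ultimately show ?thesis by (simp add: \<beta>_def)
qed

lemma cmod_sq: "cmod a * cmod a = Re a * Re a + Im a * Im a"
  by (metis cmod_power2 power2_eq_square)

lemma bessel2:
  fixes e e1 e2 :: "'a::chilbert"
  assumes n1: "norm e1 = 1" and n2: "norm e2 = 1" and o: "cinner e1 e2 = 0" and n: "norm e = 1"
  shows "(cmod (cinner e1 e))^2 + (cmod (cinner e2 e))^2 \<le> 1"
proof -
  define a1 where "a1 = cinner e e1"
  define a2 where "a2 = cinner e e2"
  have o': "cinner e2 e1 = 0" using o by (metis cinner_commute complex_cnj_zero)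
  have c1: "cinner e1 e = cnj a1" by (simp add: a1_def cinner_commute[of e1 e])
  have c2: "cinner e2 e = cnj a2" by (simp add: a2_def cinner_commute[of e2 e])
  define r where "r = e - cscale a1 e1 - cscale a2 e2"
  have r1: "cinner r e1 = 0"
    by (simp add: r_def cinner_diff1 cinner_cscale1 cinner_self_norm1[OF n1] o' a1_def)
  have r2: "cinner r e2 = 0"
    by (simp add: r_def cinner_diff1 cinner_cscale1 cinner_self_norm1[OF n2] o a2_def)
  have "cinner r r = cinner r e"
    by (subst (2) r_def) (simp add: cinner_diff2 cinner_cscale2 r1 r2)
  also have "\<dots> = 1 - a1 * cnj a1 - a2 * cnj a2"
    by (simp add: r_def cinner_diff1 cinner_cscale1 cinner_self_norm1[OF n] c1 c2)
  finally have "Re (cinner r r) = 1 - (cmod a1)^2 - (cmod a2)^2"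
    by (simp add: power2_eq_square cmod_sq)
  moreover have "0 \<le> Re (cinner r r)" by (simp add: cinner_self)
  moreover have "cmod (cinner e1 e) = cmod a1" "cmod (cinner e2 e) = cmod a2" by (simp_all add: c1 c2)
  ultimately show ?thesis by simp
qed

lemma compr_pair:
  fixes A P :: "'a::chilbert \<Rightarrow> 'a"
  assumes oP: "orth_proj P" and bA: "bounded_clinear_op A"
    and c1: "is_compr_eigenvalue P A w1" and c2: "is_compr_eigenvalue P A w2" and ne: "w1 \<noteq> w2"
  shows "\<exists>e1 e2. norm e1 = 1 \<and> norm e2 = 1 \<and> cinner e1 e2 = 0
           \<and> cinner (A e1) e1 = w1 \<and> cinner (A e2) e2 = w2"
proof -
  have bP: "bounded_clinear_op P" using oP by (simp add: orth_proj_def)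
  have adjP: "is_adjoint P P" using oP by (simp add: orth_proj_def)
  have PP0: "P \<circ> P = P" using oP by (simp add: orth_proj_def)
  have PP: "P (P x) = P x" for x using PP0 by (metis comp_apply)
  have inP: "P x = x" if "x \<in> range P" for x
  proof -
    from that obtain z where "x = P z" by blast
    then show ?thesis by (simp add: PP)
  qed
  have key: "cinner (A x) u = w * cinner x u"
    if "P u = u" "P (A x) = cscale w x" for x u w
  proof -
    have "cinner (A x) u = cinner (A x) (P u)" using that by simp
    also have "\<dots> = cinner (P (A x)) u" by (rule adj_sym[OF adjP, symmetric])
    also have "\<dots> = w * cinner x u" using that by (simp add: cinner_cscale1)
    finally show ?thesis .
  qed
  obtain x1 where x1: "x1 \<in> range P" "x1 \<noteq> 0" "P (A (P x1)) = cscale w1 x1"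
    using c1 unfolding is_compr_eigenvalue_def by blast
  obtain x2 where x2: "x2 \<in> range P" "x2 \<noteq> 0" "P (A (P x2)) = cscale w2 x2"
    using c2 unfolding is_compr_eigenvalue_def by blast
  have Px1: "P x1 = x1" by (rule inP[OF x1(1)])
  have Px2: "P x2 = x2" by (rule inP[OF x2(1)])
  have PAx1: "P (A x1) = cscale w1 x1" using x1(3) Px1 by simp
  have PAx2: "P (A x2) = cscale w2 x2" using x2(3) Px2 by simp
  define k1 where "k1 = complex_of_real (1 / norm x1)"
  define e1 where "e1 = cscale k1 x1"
  have ne1: "norm e1 = 1" using x1(2) by (simp add: e1_def k1_def norm_divide)
  have Pe1: "P e1 = e1" by (simp add: e1_def bclin_cscale[OF bP] Px1)
  have PAe1: "P (A e1) = cscale w1 e1"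
    by (simp add: e1_def bclin_cscale[OF bA] bclin_cscale[OF bP] PAx1 cscale_cscale mult.commute)
  have e1e1: "cinner e1 e1 = 1" by (rule cinner_self_norm1[OF ne1])
  define \<beta> where "\<beta> = cinner x2 e1"
  define y2 where "y2 = x2 - cscale \<beta> e1"
  have Py2: "P y2 = y2" by (simp add: y2_def bclin_diff[OF bP] bclin_cscale[OF bP] Px2 Pe1)
  have e1y2: "cinner e1 y2 = 0"
    by (simp add: y2_def cinner_diff2 cinner_cscale2 e1e1 \<beta>_def cinner_commute[of e1 x2])
  have x2eq: "x2 = y2 + cscale \<beta> e1" by (simp add: y2_def)
  have "cinner x2 y2 = cinner (y2 + cscale \<beta> e1) y2" by (simp only: x2eq[symmetric])
  also have "\<dots> = cinner y2 y2" by (simp add: cinner_add1 cinner_cscale1 e1y2)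
  finally have x2y2: "cinner x2 y2 = cinner y2 y2" .
  have Ay2: "cinner (A y2) y2 = w2 * cinner y2 y2"
  proof -
    have "cinner (A y2) y2 = cinner (A x2) y2 - \<beta> * cinner (A e1) y2"
      by (simp add: y2_def bclin_diff[OF bA] bclin_cscale[OF bA] cinner_diff1 cinner_cscale1)
    also have "\<dots> = w2 * cinner x2 y2 - \<beta> * (w1 * cinner e1 y2)"
      by (simp add: key[OF Py2 PAx2] key[OF Py2 PAe1])
    finally show ?thesis by (simp add: e1y2 x2y2)
  qed
  have y20: "y2 \<noteq> 0"
  proof
    assume y0: "y2 = 0"
    then have x2e: "x2 = cscale \<beta> e1" by (simp add: y2_def)
    have "cscale w2 x2 = P (A x2)" by (simp add: PAx2)
    also have "\<dots> = cscale w1 x2"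
      by (simp add: x2e bclin_cscale[OF bA] bclin_cscale[OF bP] PAe1 cscale_cscale mult.commute)
    finally have "cscale (w2 - w1) x2 = 0" by (simp add: cscale_diff1)
    then have "cmod (w2 - w1) * norm x2 = 0" by (metis norm_cscale norm_zero)
    then show False using ne x2(2) by simp
  qed
  define k2 where "k2 = complex_of_real (1 / norm y2)"
  define e2 where "e2 = cscale k2 y2"
  have ne2: "norm e2 = 1" using y20 by (simp add: e2_def k2_def norm_divide)
  have o: "cinner e1 e2 = 0" by (simp add: e2_def cinner_cscale2 e1y2)
  have Ae1: "cinner (A e1) e1 = w1" by (simp add: key[OF Pe1 PAe1] e1e1)
  have Ae2: "cinner (A e2) e2 = w2"
  proof -
    have "cinner (A e2) e2 = k2 * cnj k2 * cinner (A y2) y2"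
      by (simp add: e2_def bclin_cscale[OF bA] cinner_cscale1 cinner_cscale2)
    also have "\<dots> = w2 * (k2 * cnj k2 * cinner y2 y2)" by (simp add: Ay2)
    also have "k2 * cnj k2 * cinner y2 y2 = 1" using y20
      by (simp add: k2_def cinner_self power2_eq_square)
    finally show ?thesis by simp
  qed
  show ?thesis using ne1 ne2 o Ae1 Ae2 by blast
qed

theorem theoremA2p3:
  fixes A P :: "'a::chilbert \<Rightarrow> 'a" and z0 z1 :: complex
  assumes "normal_op A"
    and "simple_eigenvalue A z0"
    and "z0 \<notin> closure (convex hull (spec A - {z0}))"
    and "z1 \<in> closure (convex hull (spec A - {z0}))"
    and "\<forall>w \<in> closure (convex hull (spec A - {z0})). cmod (z0 - z1) \<le> cmod (w - z0)"
    and "orth_proj P"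
  shows "(\<forall>w1 w2. is_compr_eigenvalue P A w1 \<and> is_compr_eigenvalue P A w2 \<and> w1 \<noteq> w2 \<longrightarrow>
            cdot (w1 - z1) (z0 - z1) / (cmod (z1 - z0))\<^sup>2
              + cdot (w2 - z1) (z0 - z1) / (cmod (z1 - z0))\<^sup>2 \<le> 1
          \<and> cmod (w1 - z0) + cmod (w2 - z0) \<ge> cmod (z1 - z0))
       \<and> (\<forall>w w'. is_compr_eigenvalue P A w \<and> is_compr_eigenvalue P A w'
            \<and> cmod (w - z0) < cmod (z1 - z0) / 2 \<and> cmod (w' - z0) < cmod (z1 - z0) / 2
            \<longrightarrow> w = w')"

proof -
  note nA = assms(1)
  have bA: "bounded_clinear_op A" using nA by (simp add: normal_op_def)
  obtain v where v: "v \<noteq> 0" "eigenspace A z0 = range (\<lambda>c. cscale c v)"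
    using assms(2) unfolding simple_eigenvalue_def by blast
  have "v \<in> range (\<lambda>c. cscale c v)" by (rule range_eqI[of _ _ 1]) simp
  then have "v \<in> eigenspace A z0" using v(2) by simp
  then have Av: "A v = cscale z0 v" by (simp add: eigenspace_def)
  define k where "k = complex_of_real (1 / norm v)"
  define e where "e = cscale k v"
  have e1: "norm e = 1" using v(1) by (simp add: e_def k_def norm_divide)
  have ev: "A e = cscale z0 e"
    by (simp add: e_def bclin_cscale[OF bA] Av cscale_cscale mult.commute)
  have simple: "\<exists>\<beta>. x = cscale \<beta> e" if "A x = cscale z0 x" for x
  proof -
    have "x \<in> eigenspace A z0" using that by (simp add: eigenspace_def)
    then obtain c where c: "x = cscale c v" using v(2) by auto
    have "cscale (c * complex_of_real (norm v)) e = cscale (c * (complex_of_real (norm v) * k)) v"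
      by (simp add: e_def cscale_cscale mult.assoc)
    also have "complex_of_real (norm v) * k = 1" using v(1) by (simp add: k_def)
    finally have "x = cscale (c * complex_of_real (norm v)) e" by (simp add: c)
    then show ?thesis by blast
  qed
  define Cl where "Cl = closure (convex hull (spec A - {z0}))"
  have z10: "z1 \<noteq> z0" using assms(3,4) by auto
  define d where "d = cmod (z1 - z0)"
  have d0: "0 < d" using z10 by (simp add: d_def)
  have dd: "cmod (z0 - z1) = d" by (simp add: d_def norm_minus_commute)
  define c where "c = cnj (z0 - z1) / complex_of_real (d^2)"
  have cz: "c * (z0 - z1) = 1"
  proof -
    have "cnj (z0 - z1) * (z0 - z1) = complex_of_real (d^2)"
      using complex_norm_square[of "z0 - z1"] by (simp add: dd mult.commute)
    then show ?thesis using d0 by (simp add: c_def)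
  qed
  have cm: "cmod c = 1 / d"
  proof -
    have a: "cmod (cnj (z0 - z1)) = d" by (simp only: complex_mod_cnj dd)
    have b: "cmod (complex_of_real (d^2)) = d^2" by (simp only: norm_of_real) simp
    have "cmod c = cmod (cnj (z0 - z1)) / cmod (complex_of_real (d^2))"
      by (simp only: c_def norm_divide)
    also have "\<dots> = d / d^2" by (simp only: a b)
    also have "\<dots> = 1 / d" using d0 by (simp add: power2_eq_square)
    finally show ?thesis .
  qed
  have Rec: "Re (c * (w - z1)) = ((w - z1) \<bullet> (z0 - z1)) / d^2" for w
  proof -
    have "c * (w - z1) = ((w - z1) * cnj (z0 - z1)) / complex_of_real (d^2)"
      by (simp add: c_def)
    then have "Re (c * (w - z1)) = Re ((w - z1) * cnj (z0 - z1)) / d^2"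
      by (simp only: Re_divide_of_real)
    then show ?thesis by (simp only: Re_mult_cnj_inner)
  qed
  have hp: "Re (c * (w - z1)) \<le> 0" if w: "w \<in> spec A" "w \<noteq> z0" for w
  proof -
    have "w \<in> Cl" unfolding Cl_def
      using w hull_subset[of "spec A - {z0}" convex] closure_subset by blast
    have "(w - z1) \<bullet> (z0 - z1) \<le> 0"
      by (rule nearest_inner[OF convex_closure[OF convex_convex_hull] assms(4) \<open>w \<in> Cl\<close>[unfolded Cl_def] assms(5)])
    then have "((w - z1) \<bullet> (z0 - z1)) / d^2 \<le> 0" using d0 by (simp add: divide_nonpos_pos)
    then show ?thesis by (simp only: Rec)
  qed
  define M where "M = cmod c * (onorm A + cmod z1)"
  have M0: "0 \<le> M" using bclin_onorm_nonneg[OF bA] by (simp add: M_def)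
  have Mb: "cmod (c * (w - z1)) \<le> M" if w: "w \<in> spec A" for w
  proof -
    have "cmod w \<le> onorm A" using spec_bound[OF bA, of w] w by force
    then have "cmod (w - z1) \<le> onorm A + cmod z1"
      using norm_triangle_ineq4[of w z1] by linarith
    then show ?thesis by (simp add: M_def norm_mult mult_left_mono)
  qed
  have K: "Re (c * cinner (A y - cscale z1 y) y) \<le> 0" if "cinner y e = 0" for y
    by (rule K_lemma[OF nA ev e1 simple cz hp M0 Mb that]) auto
  have L: "Re (c * cinner (A x - cscale z1 x) x) \<le> (cmod (cinner x e))^2" for x
    by (rule L_lemma[OF nA ev e1 cz K])
  have F: "cdot (w - z1) (z0 - z1) / (cmod (z1 - z0))^2 = Re (c * (w - z1))" for w
  proof -
    have "cdot (w - z1) (z0 - z1) / (cmod (z1 - z0))^2 = ((w - z1) \<bullet> (z0 - z1)) / d^2"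
      by (simp only: cdot_def Re_mult_cnj_inner d_def)
    then show ?thesis by (simp only: Rec)
  qed
  have Flow: "1 - cmod (w - z0) / d \<le> Re (c * (w - z1))" for w
  proof -
    have "c * (w - z1) = c * (w - z0) + c * (z0 - z1)" by (simp add: algebra_simps)
    also have "\<dots> = c * (w - z0) + 1" by (simp only: cz)
    finally have "Re (c * (w - z1)) = Re (c * (w - z0)) + 1" by simp
    moreover have "- cmod (c * (w - z0)) \<le> Re (c * (w - z0))"
      using abs_Re_le_cmod[of "c * (w - z0)"] by linarith
    moreover have "cmod (c * (w - z0)) = cmod (w - z0) / d" by (simp add: norm_mult cm)
    ultimately show ?thesis by linarith
  qed
  have part1: "Re (c * (w1 - z1)) + Re (c * (w2 - z1)) \<le> 1"
    if H: "is_compr_eigenvalue P A w1" "is_compr_eigenvalue P A w2" "w1 \<noteq> w2" for w1 w2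
  proof -
    obtain e1 e2 where E: "norm e1 = 1" "norm e2 = 1" "cinner e1 e2 = 0"
        "cinner (A e1) e1 = w1" "cinner (A e2) e2 = w2"
      using compr_pair[OF assms(6) bA H] by blast
    have "cinner (A e1 - cscale z1 e1) e1 = w1 - z1"
      by (simp add: cinner_diff1 cinner_cscale1 cinner_self_norm1[OF E(1)] E(4))
    then have 1: "Re (c * (w1 - z1)) \<le> (cmod (cinner e1 e))^2" using L[of e1] by simp
    have "cinner (A e2 - cscale z1 e2) e2 = w2 - z1"
      by (simp add: cinner_diff1 cinner_cscale1 cinner_self_norm1[OF E(2)] E(5))
    then have 2: "Re (c * (w2 - z1)) \<le> (cmod (cinner e2 e))^2" using L[of e2] by simp
    have "(cmod (cinner e1 e))^2 + (cmod (cinner e2 e))^2 \<le> 1" by (rule bessel2[OF E(1-3) e1])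
    then show ?thesis using 1 2 by linarith
  qed
  have part2: "d \<le> cmod (w1 - z0) + cmod (w2 - z0)"
    if "is_compr_eigenvalue P A w1" "is_compr_eigenvalue P A w2" "w1 \<noteq> w2" for w1 w2
  proof -
    have "1 - cmod (w1 - z0) / d + (1 - cmod (w2 - z0) / d) \<le> 1"
      using part1[OF that] Flow[of w1] Flow[of w2] by linarith
    then have "1 \<le> (cmod (w1 - z0) + cmod (w2 - z0)) / d" by (simp add: add_divide_distrib)
    then show ?thesis using d0 by (simp add: le_divide_eq)
  qed
  show ?thesis
  proof (intro conjI allI impI)
    fix w1 w2 assume H: "is_compr_eigenvalue P A w1 \<and> is_compr_eigenvalue P A w2 \<and> w1 \<noteq> w2"
    show "cdot (w1 - z1) (z0 - z1) / (cmod (z1 - z0))\<^sup>2 + cdot (w2 - z1) (z0 - z1) / (cmod (z1 - z0))\<^sup>2 \<le> 1"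
      unfolding F using part1 H by blast
    show "cmod (z1 - z0) \<le> cmod (w1 - z0) + cmod (w2 - z0)"
      unfolding d_def[symmetric] using part2 H by blast
  next
    fix w w' assume H: "is_compr_eigenvalue P A w \<and> is_compr_eigenvalue P A w'
            \<and> cmod (w - z0) < cmod (z1 - z0) / 2 \<and> cmod (w' - z0) < cmod (z1 - z0) / 2"
    show "w = w'"
    proof (rule ccontr)
      assume "w \<noteq> w'"
      then have "d \<le> cmod (w - z0) + cmod (w' - z0)" using part2 H by blast
      then show False using H by (simp add: d_def)
    qed
  qed
qed

end
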